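(* Let $\mathcal{G}$ be a finite groupoid, $R$ a unital ring, $\alpha=(\{D_g\},\{\alpha_g\},\{w_{g,h}\})$ a globalizable groupoid twisted partial action of $\mathcal{G}$ on $R$, and $\beta=(\{E_g\},\{\beta_g\},\{u_{g,h}\})$ a globalization of $\alpha$, a groupoid twisted global action of $\mathcal{G}$ on a ring $T$. Then the rings $R \rtimes_{\alpha,w} \mathcal{G}$ and $T \rtimes_{\beta,u} \mathcal{G}$ are Morita equivalent.
   Context: Rings are associative, not necessarily unital. Groupoid: nonempty set $\mathcal{G}$ with partial associative product, each $g$ having right identity $d(g)=g^{-1}g$, left identity $r(g)=gg^{-1}$ and inverse $g^{-1}$; $gh$ defined iff $d(g)=r(h)$; $\mathcal{G}_0$ identities, $\mathcal{G}^2$ composable pairs, $\mathcal{G}^3$ composable triples. $\mathcal{M}(A)$ denotes the multiplier ring of a ring $A$ (pairs $(R,L)$, $R$ a right-module endomorphism written on the right, $L$ a left-module endomorphism, $(aR)b=a(Lb)$; $aw=(a)R$, $wa=L(a)$). A groupoid twisted partial action of $\mathcal{G}$ on $R$: $(\{D_g\},\{\alpha_g\},\{w_{g,h}\})$ with $D_{r(g)}$ an ideal of $R$, $D_g$ an ideal of $D_{r(g)}$, $\alpha_g:D_{g^{-1}}\to D_g$ ring isomorphisms, $w_{g,h}$ invertible in $\mathcal{M}(D_gD_{gh})$ for $(g,h)\in\mathcal{G}^2$, such that for all $(g,h,t)\in\mathcal{G}^3$: $D_g^2=D_g$, $D_gD_h=D_hD_g$; $D_e=D_{r(e)}$, $\alpha_e=\mathrm{id}$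 ($e\in\mathcal{G}_0$); $\alpha_g(D_{g^{-1}}D_h)=D_gD_{gh}$; $\alpha_g\alpha_h(a)=w_{g,h}\alpha_{gh}(a)w_{g,h}^{-1}$ for $a\in D_{h^{-1}}D_{h^{-1}g^{-1}}$; $w_{r(g),g}=w_{g,d(g)}=\mathrm{id}_{\mathcal{M}(D_g)}$; $\alpha_g(aw_{h,t})w_{g,ht}=\alpha_g(a)w_{g,h}w_{gh,t}$ for $a\in D_{g^{-1}}D_hD_{ht}$. It is global if $D_g=D_{r(g)}$ for all $g$. A global action $\beta$ on $T$ is a globalization of $\alpha$ (and $\alpha$ is globalizable) if there are ring monomorphisms $\varphi_e:D_e\to E_e$ ($e\in\mathcal{G}_0$) with: $\varphi_e(D_e)$ an ideal of $E_e$; $E_g=\sum_{r(h)=r(g)}\beta_h(\varphi_{d(h)}(D_{d(h)}))$; $\varphi_{r(g)}(D_g)=\varphi_{r(g)}(D_{r(g)})\cap\beta_g(\varphi_{d(g)}(D_{d(g)}))$; $\beta_g\varphi_{d(g)}=\varphi_{r(g)}\alpha_g$ on $D_{g^{-1}}$; $\varphi_{r(g)}(aw_{g,h})=\varphi_{r(g)}(a)u_{g,h}$, $\varphi_{r(g)}(w_{g,h}a)=u_{g,h}\varphi_{r(g)}(a)$ for $a\in D_gD_{gh}$. Twisted crossed product $R\rtimes_{\alpha,w}\mathcal{G}=\bigoplus_gD_g\delta_g$ with $(a_g\delta_g)(b_h\delta_h)=\alpha_g(\alpha_g^{-1}(a_g)b_h)w_{g,h}\delta_{gh}$ if $(g,h)\in\mathcal{G}^2$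 and $0$ otherwise; similarly for $T\rtimes_{\beta,u}\mathcal{G}$. Two rings are Morita equivalent if there is a Morita context between them with both pairings surjective (equivalently, their module categories are equivalent). *)

theory Defs
  imports "HOL-Algebra.Ring"
begin

definition rng :: "('a,'c) ring_scheme \<Rightarrow> bool" where
  "rng R \<longleftrightarrow> abelian_group R \<and>
     (\<forall>x\<in>carrier R. \<forall>y\<in>carrier R. x \<otimes>\<^bsub>R\<^esub> y \<in> carrier R \<and>
        (\<forall>z\<in>carrier R. (x \<otimes>\<^bsub>R\<^esub> y) \<otimes>\<^bsub>R\<^esub> z = x \<otimes>\<^bsub>R\<^esub> (y \<otimes>\<^bsub>R\<^esub> z)
           \<and> (x \<oplus>\<^bsub>R\<^esub> y) \<otimes>\<^bsub>R\<^esub> z = x \<otimes>\<^bsub>R\<^esub> z \<oplus>\<^bsub>R\<^esub> y \<otimes>\<^bsub>R\<^esub> z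
           \<and> z \<otimes>\<^bsub>R\<^esub> (x \<oplus>\<^bsub>R\<^esub> y) = z \<otimes>\<^bsub>R\<^esub> x \<oplus>\<^bsub>R\<^esub> z \<otimes>\<^bsub>R\<^esub> y))"

definition rng_ideal :: "'a set \<Rightarrow> ('a,'c) ring_scheme \<Rightarrow> bool" where
  "rng_ideal I R \<longleftrightarrow> I \<subseteq> carrier R \<and> \<zero>\<^bsub>R\<^esub> \<in> I \<and>
     (\<forall>x\<in>I. \<forall>y\<in>I. x \<oplus>\<^bsub>R\<^esub> y \<in> I) \<and> (\<forall>x\<in>I. \<ominus>\<^bsub>R\<^esub> x \<in> I) \<and>
     (\<forall>x\<in>I. \<forall>r\<in>carrier R. r \<otimes>\<^bsub>R\<^esub> x \<in> I \<and> x \<otimes>\<^bsub>R\<^esub> r \<in> I)"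

inductive_set add_span :: "('a,'c) ring_scheme \<Rightarrow> 'a set \<Rightarrow> 'a set"
  for R :: "('a,'c) ring_scheme" and S :: "'a set" where
  span_zero: "\<zero>\<^bsub>R\<^esub> \<in> add_span R S"
| span_gen: "x \<in> S \<Longrightarrow> x \<in> add_span R S"
| span_add: "x \<in> add_span R S \<Longrightarrow> y \<in> add_span R S \<Longrightarrow> x \<oplus>\<^bsub>R\<^esub> y \<in> add_span R S"
| span_neg: "x \<in> add_span R S \<Longrightarrow> \<ominus>\<^bsub>R\<^esub> x \<in> add_span R S"

definition set_prod :: "('a,'c) ring_scheme \<Rightarrow> 'a set \<Rightarrow> 'a set \<Rightarrow> 'a set" where
  "set_prod R I J = add_span R {x \<otimes>\<^bsub>R\<^esub> y | x y. x \<in> I \<and> y \<in> J}"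

definition rng_hom_on :: "('a,'c) ring_scheme \<Rightarrow> ('b,'d) ring_scheme \<Rightarrow> 'a set \<Rightarrow> ('a \<Rightarrow> 'b) \<Rightarrow> bool" where
  "rng_hom_on R S A f \<longleftrightarrow> (\<forall>x\<in>A. \<forall>y\<in>A. f (x \<oplus>\<^bsub>R\<^esub> y) = f x \<oplus>\<^bsub>S\<^esub> f y \<and>
                                       f (x \<otimes>\<^bsub>R\<^esub> y) = f x \<otimes>\<^bsub>S\<^esub> f y)"

text \<open>A multiplier of the ideal A of R is a pair (Rm, Lm); a w = Rm a (right action),
  w a = Lm a (left action).\<close>
definition is_multiplier :: "('a,'c) ring_scheme \<Rightarrow> 'a set \<Rightarrow> ('a \<Rightarrow> 'a) \<times> ('a \<Rightarrow> 'a) \<Rightarrow> bool" where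
  "is_multiplier R A w \<longleftrightarrow>
     (\<forall>a\<in>A. fst w a \<in> A \<and> snd w a \<in> A) \<and>
     (\<forall>a\<in>A. \<forall>b\<in>A.
        fst w (a \<oplus>\<^bsub>R\<^esub> b) = fst w a \<oplus>\<^bsub>R\<^esub> fst w b \<and>
        snd w (a \<oplus>\<^bsub>R\<^esub> b) = snd w a \<oplus>\<^bsub>R\<^esub> snd w b \<and>
        fst w (a \<otimes>\<^bsub>R\<^esub> b) = a \<otimes>\<^bsub>R\<^esub> fst w b \<and>
        snd w (a \<otimes>\<^bsub>R\<^esub> b) = snd w a \<otimes>\<^bsub>R\<^esub> b \<and>
        fst w a \<otimes>\<^bsub>R\<^esub> b = a \<otimes>\<^bsub>R\<^esub> snd w b)"

text \<open>w' is an inverse of w in M(A). Product in M(A): a(ww') = (aw)w', (ww')a = w(w'a).\<close>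
definition mult_inverse :: "('a,'c) ring_scheme \<Rightarrow> 'a set \<Rightarrow> ('a \<Rightarrow> 'a) \<times> ('a \<Rightarrow> 'a)
    \<Rightarrow> ('a \<Rightarrow> 'a) \<times> ('a \<Rightarrow> 'a) \<Rightarrow> bool" where
  "mult_inverse R A w w' \<longleftrightarrow> is_multiplier R A w' \<and>
     (\<forall>a\<in>A. fst w' (fst w a) = a \<and> fst w (fst w' a) = a \<and>
             snd w (snd w' a) = a \<and> snd w' (snd w a) = a)"

definition invertible_multiplier :: "('a,'c) ring_scheme \<Rightarrow> 'a set \<Rightarrow> ('a \<Rightarrow> 'a) \<times> ('a \<Rightarrow> 'a) \<Rightarrow> bool" where
  "invertible_multiplier R A w \<longleftrightarrow> is_multiplier R A w \<and> (\<exists>w'. mult_inverse R A w w')"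

definition gdom :: "('g \<Rightarrow> 'g \<Rightarrow> 'g) \<Rightarrow> ('g \<Rightarrow> 'g) \<Rightarrow> 'g \<Rightarrow> 'g" where
  "gdom m i g = m (i g) g"

definition gran :: "('g \<Rightarrow> 'g \<Rightarrow> 'g) \<Rightarrow> ('g \<Rightarrow> 'g) \<Rightarrow> 'g \<Rightarrow> 'g" where
  "gran m i g = m g (i g)"

definition composable :: "('g \<Rightarrow> 'g \<Rightarrow> 'g) \<Rightarrow> ('g \<Rightarrow> 'g) \<Rightarrow> 'g \<Rightarrow> 'g \<Rightarrow> bool" where
  "composable m i g h \<longleftrightarrow> gdom m i g = gran m i h"

text \<open>Groupoid (Exel-style axioms): G nonempty, with inverse i and partial product m,
  defined exactly on pairs with d(g) = r(h).\<close>
definition groupoid :: "'g set \<Rightarrow> ('g \<Rightarrow> 'g \<Rightarrow> 'g) \<Rightarrow> ('g \<Rightarrow> 'g) \<Rightarrow> bool" where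
  "groupoid G m i \<longleftrightarrow> G \<noteq> {} \<and>
     (\<forall>g\<in>G. i g \<in> G \<and> i (i g) = g) \<and>
     (\<forall>g\<in>G. \<forall>h\<in>G. composable m i g h \<longrightarrow>
         m g h \<in> G \<and> m (i g) (m g h) = h \<and> m (m g h) (i h) = g) \<and>
     (\<forall>g\<in>G. \<forall>h\<in>G. \<forall>t\<in>G. composable m i g h \<and> composable m i h t \<longrightarrow>
         composable m i (m g h) t \<and> composable m i g (m h t) \<and> m (m g h) t = m g (m h t))"

definition identities :: "'g set \<Rightarrow> ('g \<Rightarrow> 'g \<Rightarrow> 'g) \<Rightarrow> ('g \<Rightarrow> 'g) \<Rightarrow> 'g set" where
  "identities G m i = gdom m i ` G"

definition twisted_partial_action ::
  "'g set \<Rightarrow> ('g \<Rightarrow> 'g \<Rightarrow> 'g) \<Rightarrow> ('g \<Rightarrow> 'g) \<Rightarrow> ('a,'c) ring_scheme \<Rightarrow> ('g \<Rightarrow> 'a set) \<Rightarrow>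
   ('g \<Rightarrow> 'a \<Rightarrow> 'a) \<Rightarrow> ('g \<Rightarrow> 'g \<Rightarrow> ('a \<Rightarrow> 'a) \<times> ('a \<Rightarrow> 'a)) \<Rightarrow> bool" where
  "twisted_partial_action G m i R D \<alpha> w \<longleftrightarrow>
     (\<forall>g\<in>G. rng_ideal (D (gran m i g)) R) \<and>
     (\<forall>g\<in>G. rng_ideal (D g) (R\<lparr>carrier := D (gran m i g)\<rparr>)) \<and>
     (\<forall>g\<in>G. bij_betw (\<alpha> g) (D (i g)) (D g) \<and> rng_hom_on R R (D (i g)) (\<alpha> g)) \<and>
     (\<forall>g\<in>G. \<forall>h\<in>G. composable m i g h \<longrightarrow>
        invertible_multiplier R (set_prod R (D g) (D (m g h))) (w g h)) \<and>
     (\<forall>e\<in>identities G m i. D e = D (gran m i e) \<and> (\<forall>a\<in>D e. \<alpha> e a = a)) \<and>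
     (\<forall>g\<in>G. \<forall>h\<in>G. \<forall>t\<in>G. composable m i g h \<and> composable m i h t \<longrightarrow>
        set_prod R (D g) (D g) = D g \<and>
        set_prod R (D g) (D h) = set_prod R (D h) (D g) \<and>
        \<alpha> g ` set_prod R (D (i g)) (D h) = set_prod R (D g) (D (m g h)) \<and>
        (\<forall>a\<in>set_prod R (D (i h)) (D (m (i h) (i g))). \<forall>w'.
            mult_inverse R (set_prod R (D g) (D (m g h))) (w g h) w' \<longrightarrow>
            \<alpha> g (\<alpha> h a) = fst w' (snd (w g h) (\<alpha> (m g h) a))) \<and>
        (\<forall>a\<in>D g. fst (w (gran m i g) g) a = a \<and> snd (w (gran m i g) g) a = a \<and>
                  fst (w g (gdom m i g)) a = a \<and> snd (w g (gdom m i g)) a = a) \<and>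
        (\<forall>a\<in>set_prod R (set_prod R (D (i g)) (D h)) (D (m h t)).
            fst (w g (m h t)) (\<alpha> g (fst (w h t) a)) =
            fst (w (m g h) t) (fst (w g h) (\<alpha> g a))))"

definition global_action ::
  "'g set \<Rightarrow> ('g \<Rightarrow> 'g \<Rightarrow> 'g) \<Rightarrow> ('g \<Rightarrow> 'g) \<Rightarrow> ('g \<Rightarrow> 'a set) \<Rightarrow> bool" where
  "global_action G m i D \<longleftrightarrow> (\<forall>g\<in>G. D g = D (gran m i g))"

definition ideal_sum :: "('a,'c) ring_scheme \<Rightarrow> 'a set set \<Rightarrow> 'a set" where
  "ideal_sum R S = add_span R (\<Union>S)"

definition is_globalization ::
  "'g set \<Rightarrow> ('g \<Rightarrow> 'g \<Rightarrow> 'g) \<Rightarrow> ('g \<Rightarrow> 'g) \<Rightarrow>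
   ('a,'c) ring_scheme \<Rightarrow> ('g \<Rightarrow> 'a set) \<Rightarrow> ('g \<Rightarrow> 'a \<Rightarrow> 'a) \<Rightarrow> ('g \<Rightarrow> 'g \<Rightarrow> ('a \<Rightarrow> 'a) \<times> ('a \<Rightarrow> 'a)) \<Rightarrow>
   ('b,'d) ring_scheme \<Rightarrow> ('g \<Rightarrow> 'b set) \<Rightarrow> ('g \<Rightarrow> 'b \<Rightarrow> 'b) \<Rightarrow> ('g \<Rightarrow> 'g \<Rightarrow> ('b \<Rightarrow> 'b) \<times> ('b \<Rightarrow> 'b)) \<Rightarrow>
   ('g \<Rightarrow> 'a \<Rightarrow> 'b) \<Rightarrow> bool" where
  "is_globalization G m i R D \<alpha> w T E \<beta> u \<phi> \<longleftrightarrow>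
     twisted_partial_action G m i T E \<beta> u \<and> global_action G m i E \<and>
     (\<forall>e\<in>identities G m i.
        inj_on (\<phi> e) (D e) \<and> \<phi> e ` D e \<subseteq> E e \<and> rng_hom_on R T (D e) (\<phi> e) \<and>
        rng_ideal (\<phi> e ` D e) (T\<lparr>carrier := E e\<rparr>)) \<and>
     (\<forall>g\<in>G.
        E g = ideal_sum T {\<beta> h ` (\<phi> (gdom m i h) ` D (gdom m i h)) | h. h \<in> G \<and> gran m i h = gran m i g} \<and>
        \<phi> (gran m i g) ` D g = \<phi> (gran m i g) ` D (gran m i g) \<inter> \<beta> g ` (\<phi> (gdom m i g) ` D (gdom m i g)) \<and>
        (\<forall>a\<in>D (i g). \<beta> g (\<phi> (gdom m i g) a) = \<phi> (gran m i g) (\<alpha> g a))) \<and>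
     (\<forall>g\<in>G. \<forall>h\<in>G. composable m i g h \<longrightarrow>
        (\<forall>a\<in>set_prod R (D g) (D (m g h)).
           \<phi> (gran m i g) (fst (w g h) a) = fst (u g h) (\<phi> (gran m i g) a) \<and>
           \<phi> (gran m i g) (snd (w g h) a) = snd (u g h) (\<phi> (gran m i g) a)))"

text \<open>Elements of the direct sum of D_g delta_g are represented as functions f with
  f g in D g for g in G and f g = 0 outside G (G finite).\<close>
definition crossed_product ::
  "'g set \<Rightarrow> ('g \<Rightarrow> 'g \<Rightarrow> 'g) \<Rightarrow> ('g \<Rightarrow> 'g) \<Rightarrow> ('a,'c) ring_scheme \<Rightarrow> ('g \<Rightarrow> 'a set) \<Rightarrow>
   ('g \<Rightarrow> 'a \<Rightarrow> 'a) \<Rightarrow> ('g \<Rightarrow> 'g \<Rightarrow> ('a \<Rightarrow> 'a) \<times> ('a \<Rightarrow> 'a)) \<Rightarrow> ('g \<Rightarrow> 'a) ring" where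
  "crossed_product G m i R D \<alpha> w =
    \<lparr>carrier = {f. (\<forall>g\<in>G. f g \<in> D g) \<and> (\<forall>g. g \<notin> G \<longrightarrow> f g = \<zero>\<^bsub>R\<^esub>)},
     mult = (\<lambda>f f' k. finsum R
               (\<lambda>p. fst (w (fst p) (snd p))
                       (\<alpha> (fst p) (inv_into (D (i (fst p))) (\<alpha> (fst p)) (f (fst p)) \<otimes>\<^bsub>R\<^esub> f' (snd p))))
               {(g, h). g \<in> G \<and> h \<in> G \<and> composable m i g h \<and> m g h = k}),
     one = (\<lambda>_. \<zero>\<^bsub>R\<^esub>),
     zero = (\<lambda>_. \<zero>\<^bsub>R\<^esub>),
     add = (\<lambda>f f' g. f g \<oplus>\<^bsub>R\<^esub> f' g)\<rparr>"

definition bimodule :: "('a,'c) ring_scheme \<Rightarrow> ('b,'d) ring_scheme \<Rightarrow> ('m,'e) ring_scheme \<Rightarrow>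
    ('a \<Rightarrow> 'm \<Rightarrow> 'm) \<Rightarrow> ('m \<Rightarrow> 'b \<Rightarrow> 'm) \<Rightarrow> bool" where
  "bimodule A B M la ra \<longleftrightarrow> abelian_group M \<and>
     (\<forall>a\<in>carrier A. \<forall>x\<in>carrier M. la a x \<in> carrier M) \<and>
     (\<forall>x\<in>carrier M. \<forall>b\<in>carrier B. ra x b \<in> carrier M) \<and>
     (\<forall>a\<in>carrier A. \<forall>a'\<in>carrier A. \<forall>x\<in>carrier M.
        la (a \<oplus>\<^bsub>A\<^esub> a') x = la a x \<oplus>\<^bsub>M\<^esub> la a' x \<and> la (a \<otimes>\<^bsub>A\<^esub> a') x = la a (la a' x)) \<and>
     (\<forall>a\<in>carrier A. \<forall>x\<in>carrier M. \<forall>y\<in>carrier M. la a (x \<oplus>\<^bsub>M\<^esub> y) = la a x \<oplus>\<^bsub>M\<^esub> la a y) \<and>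
     (\<forall>b\<in>carrier B. \<forall>b'\<in>carrier B. \<forall>x\<in>carrier M.
        ra x (b \<oplus>\<^bsub>B\<^esub> b') = ra x b \<oplus>\<^bsub>M\<^esub> ra x b' \<and> ra x (b \<otimes>\<^bsub>B\<^esub> b') = ra (ra x b) b') \<and>
     (\<forall>b\<in>carrier B. \<forall>x\<in>carrier M. \<forall>y\<in>carrier M. ra (x \<oplus>\<^bsub>M\<^esub> y) b = ra x b \<oplus>\<^bsub>M\<^esub> ra y b) \<and>
     (\<forall>a\<in>carrier A. \<forall>x\<in>carrier M. \<forall>b\<in>carrier B. ra (la a x) b = la a (ra x b))"

text \<open>Balanced biadditive bimodule pairing M x N -> A (= A-bimodule map M (x)_B N -> A).\<close>
definition pairing :: "('a,'c) ring_scheme \<Rightarrow> ('b,'d) ring_scheme \<Rightarrow> ('m,'e) ring_scheme \<Rightarrow> ('n,'f) ring_scheme \<Rightarrow>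
    ('a \<Rightarrow> 'm \<Rightarrow> 'm) \<Rightarrow> ('m \<Rightarrow> 'b \<Rightarrow> 'm) \<Rightarrow> ('b \<Rightarrow> 'n \<Rightarrow> 'n) \<Rightarrow> ('n \<Rightarrow> 'a \<Rightarrow> 'n) \<Rightarrow>
    ('m \<Rightarrow> 'n \<Rightarrow> 'a) \<Rightarrow> bool" where
  "pairing A B M N la ra la' ra' \<tau> \<longleftrightarrow>
     (\<forall>x\<in>carrier M. \<forall>y\<in>carrier N. \<tau> x y \<in> carrier A) \<and>
     (\<forall>x\<in>carrier M. \<forall>x'\<in>carrier M. \<forall>y\<in>carrier N. \<tau> (x \<oplus>\<^bsub>M\<^esub> x') y = \<tau> x y \<oplus>\<^bsub>A\<^esub> \<tau> x' y) \<and>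
     (\<forall>x\<in>carrier M. \<forall>y\<in>carrier N. \<forall>y'\<in>carrier N. \<tau> x (y \<oplus>\<^bsub>N\<^esub> y') = \<tau> x y \<oplus>\<^bsub>A\<^esub> \<tau> x y') \<and>
     (\<forall>x\<in>carrier M. \<forall>y\<in>carrier N. \<forall>b\<in>carrier B. \<tau> (ra x b) y = \<tau> x (la' b y)) \<and>
     (\<forall>x\<in>carrier M. \<forall>y\<in>carrier N. \<forall>a\<in>carrier A.
        \<tau> (la a x) y = a \<otimes>\<^bsub>A\<^esub> \<tau> x y \<and> \<tau> x (ra' y a) = \<tau> x y \<otimes>\<^bsub>A\<^esub> a)"

definition morita_context :: "('a,'c) ring_scheme \<Rightarrow> ('b,'d) ring_scheme \<Rightarrow> ('m,'e) ring_scheme \<Rightarrow> ('n,'f) ring_scheme \<Rightarrow>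
    ('a \<Rightarrow> 'm \<Rightarrow> 'm) \<Rightarrow> ('m \<Rightarrow> 'b \<Rightarrow> 'm) \<Rightarrow> ('b \<Rightarrow> 'n \<Rightarrow> 'n) \<Rightarrow> ('n \<Rightarrow> 'a \<Rightarrow> 'n) \<Rightarrow>
    ('m \<Rightarrow> 'n \<Rightarrow> 'a) \<Rightarrow> ('n \<Rightarrow> 'm \<Rightarrow> 'b) \<Rightarrow> bool" where
  "morita_context A B M N la ra la' ra' \<tau> \<mu> \<longleftrightarrow>
     bimodule A B M la ra \<and> bimodule B A N la' ra' \<and>
     pairing A B M N la ra la' ra' \<tau> \<and> pairing B A N M la' ra' la ra \<mu> \<and>
     (\<forall>x\<in>carrier M. \<forall>y\<in>carrier N. \<forall>x'\<in>carrier M. la (\<tau> x y) x' = ra x (\<mu> y x')) \<and>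
     (\<forall>y\<in>carrier N. \<forall>x\<in>carrier M. \<forall>y'\<in>carrier N. la' (\<mu> y x) y' = ra' y (\<tau> x y'))"

text \<open>Morita equivalence witnessed by a Morita context whose bimodules have elements of
  the types 'm and 'n, with both pairings surjective.\<close>
definition morita_equivalent :: "('a,'c) ring_scheme \<Rightarrow> ('b,'d) ring_scheme \<Rightarrow> 'm itself \<Rightarrow> 'n itself \<Rightarrow> bool" where
  "morita_equivalent A B tm tn \<longleftrightarrow>
     (\<exists>(M :: 'm ring) (N :: 'n ring) la ra la' ra' \<tau> \<mu>.
        morita_context A B M N la ra la' ra' \<tau> \<mu> \<and>
        add_span A {\<tau> x y | x y. x \<in> carrier M \<and> y \<in> carrier N} = carrier A \<and>
        add_span B {\<mu> y x | x y. x \<in> carrier M \<and> y \<in> carrier N} = carrier B)"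

end

theory Submission
  imports Defs
begin

locale rngl = fixes S (structure) assumes rngS: "rng S"
begin

lemma agrp: "abelian_group S" using rngS unfolding rng_def by blast

sublocale abelian_group S by (rule agrp)

lemma m_closed[simp,intro]: "x \<in> carrier S \<Longrightarrow> y \<in> carrier S \<Longrightarrow> x \<otimes> y \<in> carrier S"
  using rngS unfolding rng_def by blast
lemma m_assoc: "x \<in> carrier S \<Longrightarrow> y \<in> carrier S \<Longrightarrow> z \<in> carrier S \<Longrightarrow> (x \<otimes> y) \<otimes> z = x \<otimes> (y \<otimes> z)"
  using rngS unfolding rng_def by blast
lemma l_distr: "x \<in> carrier S \<Longrightarrow> y \<in> carrier S \<Longrightarrow> z \<in> carrier S \<Longrightarrow> (x \<oplus> y) \<otimes> z = x \<otimes> z \<oplus> y \<otimes> z"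
  using rngS unfolding rng_def by blast
lemma r_distr: "x \<in> carrier S \<Longrightarrow> y \<in> carrier S \<Longrightarrow> z \<in> carrier S \<Longrightarrow> z \<otimes> (x \<oplus> y) = z \<otimes> x \<oplus> z \<otimes> y"
  using rngS unfolding rng_def by blast

lemma l_null[simp]: "x \<in> carrier S \<Longrightarrow> \<zero> \<otimes> x = \<zero>"
proof -
  assume x: "x \<in> carrier S"
  have "\<zero> \<otimes> x \<oplus> \<zero> \<otimes> x = \<zero> \<otimes> x" using l_distr[of \<zero> \<zero> x] x by simp
  thus ?thesis using x by simp
qed
lemma r_null[simp]: "x \<in> carrier S \<Longrightarrow> x \<otimes> \<zero> = \<zero>"
proof -
  assume x: "x \<in> carrier S"
  have "x \<otimes> \<zero> \<oplus> x \<otimes> \<zero> = x \<otimes> \<zero>" using r_distr[of \<zero> \<zero> x] x by simp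
  thus ?thesis using x by simp
qed

lemma addhom_zero:
  assumes "rngl S'" "\<zero> \<in> A" "\<forall>x\<in>A. \<forall>y\<in>A. f (x \<oplus> y) = f x \<oplus>\<^bsub>S'\<^esub> f y" "f \<zero> \<in> carrier S'"
  shows "f \<zero> = \<zero>\<^bsub>S'\<^esub>"
proof -
  interpret S': rngl S' by fact
  have "f \<zero> \<oplus>\<^bsub>S'\<^esub> f \<zero> = f \<zero>" using assms(2,3) by (metis zero_closed l_zero)
  thus ?thesis using assms(4) by simp
qed

lemma addhom_neg:
  assumes "rngl S'" "\<zero> \<in> A" "x \<in> A" "\<ominus> x \<in> A" "A \<subseteq> carrier S"
     "\<forall>x\<in>A. \<forall>y\<in>A. f (x \<oplus> y) = f x \<oplus>\<^bsub>S'\<^esub> f y" "f ` A \<subseteq> carrier S'"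
  shows "f (\<ominus> x) = \<ominus>\<^bsub>S'\<^esub> f x"
proof -
  interpret S': rngl S' by fact
  have z: "f \<zero> = \<zero>\<^bsub>S'\<^esub>" using addhom_zero[OF assms(1,2,6)] assms(2,7) by blast
  have "f (\<ominus> x) \<oplus>\<^bsub>S'\<^esub> f x = \<zero>\<^bsub>S'\<^esub>" using assms z
    by (metis l_neg subsetD)
  thus ?thesis using assms(3,4,7) by (metis S'.minus_equality image_subset_iff)
qed

end

lemma ring_rng: "ring R \<Longrightarrow> rng R"
proof -
  assume "ring R"
  then interpret ring R .
  show ?thesis unfolding rng_def
    by (auto simp: is_abelian_group l_distr r_distr m_assoc)
qed

definition addsub :: "('a,'c) ring_scheme \<Rightarrow> 'a set \<Rightarrow> bool" where
  "addsub S I \<longleftrightarrow> I \<subseteq> carrier S \<and> \<zero>\<^bsub>S\<^esub> \<in> I \<and> (\<forall>x\<in>I. \<forall>y\<in>I. x \<oplus>\<^bsub>S\<^esub> y \<in> I) \<and> (\<forall>x\<in>I. \<ominus>\<^bsub>S\<^esub> x \<in> I)"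

definition ideal_in :: "('a,'c) ring_scheme \<Rightarrow> 'a set \<Rightarrow> 'a set \<Rightarrow> bool" where
  "ideal_in S I X \<longleftrightarrow> addsub S I \<and> I \<subseteq> X \<and> (\<forall>x\<in>X. \<forall>a\<in>I. x \<otimes>\<^bsub>S\<^esub> a \<in> I \<and> a \<otimes>\<^bsub>S\<^esub> x \<in> I)"

context rngl begin

lemma add_span_sub: assumes a: "addsub S I" "X \<subseteq> I" shows "add_span S X \<subseteq> I"
proof
  fix x assume "x \<in> add_span S X"
  thus "x \<in> I" by (induction rule: add_span.induct) (use a in \<open>auto simp: addsub_def\<close>)
qed

lemma addsub_span: "X \<subseteq> carrier S \<Longrightarrow> addsub S (add_span S X)"
proof -
  assume X: "X \<subseteq> carrier S"
  have "add_span S X \<subseteq> carrier S"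
  proof
    fix x assume "x \<in> add_span S X" thus "x \<in> carrier S"
      by (induction rule: add_span.induct) (use X in auto)
  qed
  thus ?thesis unfolding addsub_def by (auto intro: add_span.intros)
qed

lemma span_mono: assumes XY: "X \<subseteq> Y" shows "add_span S X \<subseteq> add_span S Y"
proof
  fix x assume "x \<in> add_span S X" thus "x \<in> add_span S Y"
    by (induction rule: add_span.induct) (use XY in \<open>auto intro: add_span.intros\<close>)
qed

lemma ideal_in_restr:
  assumes "rng_ideal I (S\<lparr>carrier := X\<rparr>)" "addsub S X"
  shows "ideal_in S I X"
proof -
  have IX: "I \<subseteq> X" using assms(1) by (simp add: rng_ideal_def)
  have Xc: "X \<subseteq> carrier S" using assms(2) by (simp add: addsub_def)
  have neg: "\<ominus>\<^bsub>S\<lparr>carrier := X\<rparr>\<^esub> x = \<ominus> x" if x: "x \<in> X" for x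
  proof -
    have nx: "\<ominus> x \<in> X" using assms(2) x by (simp add: addsub_def)
    have xc: "x \<in> carrier S" using x Xc by blast
    have "\<ominus>\<^bsub>S\<lparr>carrier := X\<rparr>\<^esub> x = (THE y. y \<in> X \<and> x \<oplus> y = \<zero> \<and> y \<oplus> x = \<zero>)"
      by (simp add: a_inv_def m_inv_def)
    also have "\<dots> = \<ominus> x"
      apply (rule the_equality)
      using nx xc apply (simp add: l_neg r_neg)
      using xc Xc by (metis minus_equality subsetD)
    finally show ?thesis .
  qed
  have n: "\<forall>x\<in>I. \<ominus> x \<in> I"
  proof
    fix x assume x: "x \<in> I"
    hence "\<ominus>\<^bsub>S\<lparr>carrier := X\<rparr>\<^esub> x \<in> I" using assms(1) unfolding rng_ideal_def by blast
    thus "\<ominus> x \<in> I" using neg[of x] x IX by auto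
  qed
  show ?thesis using assms IX n Xc unfolding ideal_in_def addsub_def rng_ideal_def
    by auto
qed

lemma rng_ideal_in: "rng_ideal I S \<Longrightarrow> ideal_in S I (carrier S)"
  unfolding rng_ideal_def ideal_in_def addsub_def by auto

end

context rngl begin

lemma addsub_carrier: "addsub S I \<Longrightarrow> x \<in> I \<Longrightarrow> x \<in> carrier S"
  unfolding addsub_def by blast

lemma finsum_in:
  assumes I: "addsub S I" and fin: "finite A" and f: "\<forall>p\<in>A. f p \<in> I"
  shows "finsum S f A \<in> I"
  using fin f
proof (induction A rule: finite_induct)
  case empty thus ?case using I by (simp add: addsub_def)
next
  case (insert a A)
  have fc: "f \<in> A \<rightarrow> carrier S" "f a \<in> carrier S" using insert(4) I by (auto simp: addsub_def)
  have "finsum S f (insert a A) = f a \<oplus> finsum S f A"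
    using finsum_insert[OF insert(1,2)] fc by blast
  thus ?case using insert I unfolding addsub_def by auto
qed

lemma mult_zero_w:
  assumes X: "addsub S X" and w: "is_multiplier S X w"
  shows "fst w \<zero> = \<zero>" "snd w \<zero> = \<zero>"
proof -
  have z: "\<zero> \<in> X" using X by (simp add: addsub_def)
  have c: "fst w \<zero> \<in> carrier S" "snd w \<zero> \<in> carrier S"
    using w z X unfolding is_multiplier_def addsub_def by blast+
  have "fst w (\<zero> \<oplus> \<zero>) = fst w \<zero> \<oplus> fst w \<zero>" "snd w (\<zero> \<oplus> \<zero>) = snd w \<zero> \<oplus> snd w \<zero>"
    using w z unfolding is_multiplier_def by blast+
  hence e: "fst w \<zero> \<oplus> fst w \<zero> = fst w \<zero>" "snd w \<zero> \<oplus> snd w \<zero> = snd w \<zero>" by simp_all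
  from e(1) show "fst w \<zero> = \<zero>" using c by simp
  have "snd w \<zero> \<oplus> snd w \<zero> = snd w \<zero>" by (rule e(2))
  thus "snd w \<zero> = \<zero>" using c by simp
qed

lemma mult_neg_w:
  assumes X: "addsub S X" and w: "is_multiplier S X w" and x: "x \<in> X"
  shows "fst w (\<ominus> x) = \<ominus> fst w x" "snd w (\<ominus> x) = \<ominus> snd w x"
proof -
  have nx: "\<ominus> x \<in> X" using X x by (simp add: addsub_def)
  have xc: "x \<in> carrier S" "\<ominus> x \<in> carrier S" using X x nx by (auto simp: addsub_def)
  have c: "fst w x \<in> carrier S" "snd w x \<in> carrier S" "fst w (\<ominus> x) \<in> carrier S" "snd w (\<ominus> x) \<in> carrier S"
    using w x nx X unfolding is_multiplier_def addsub_def by blast+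
  have z: "fst w \<zero> = \<zero>" "snd w \<zero> = \<zero>" using mult_zero_w[OF X w] by auto
  have "fst w (\<ominus> x \<oplus> x) = fst w (\<ominus> x) \<oplus> fst w x" "snd w (\<ominus> x \<oplus> x) = snd w (\<ominus> x) \<oplus> snd w x"
    using w x nx unfolding is_multiplier_def by blast+
  hence e: "fst w (\<ominus> x) \<oplus> fst w x = \<zero>" "snd w (\<ominus> x) \<oplus> snd w x = \<zero>" using z xc by (simp_all add: l_neg)
  show "fst w (\<ominus> x) = \<ominus> fst w x" using minus_equality[OF e(1)] c by simp
  show "snd w (\<ominus> x) = \<ominus> snd w x" using minus_equality[OF e(2)] c by simp
qed

lemma mult_closed_ideal:
  assumes X: "addsub S X" and w: "is_multiplier S X w" and I: "ideal_in S I X"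
    and idem: "set_prod S I I = I" and a: "a \<in> I"
  shows "fst w a \<in> I \<and> snd w a \<in> I"
proof -
  have IX: "I \<subseteq> X" and Ia: "addsub S I" using I by (auto simp: ideal_in_def)
  have a': "a \<in> add_span S {x \<otimes> y | x y. x \<in> I \<and> y \<in> I}" using a idem by (simp add: set_prod_def)
  have sub: "add_span S {x \<otimes> y | x y. x \<in> I \<and> y \<in> I} \<subseteq> I" using idem by (simp add: set_prod_def)
  show ?thesis using a' sub
  proof (induction rule: add_span.induct)
    case span_zero thus ?case using mult_zero_w[OF X w] Ia by (simp add: addsub_def)
  next
    case (span_gen z)
    then obtain x y where z: "z = x \<otimes> y" and xy: "x \<in> I" "y \<in> I" by blast
    have xX: "x \<in> X" "y \<in> X" using xy IX by auto
    have "fst w z = x \<otimes> fst w y" "snd w z = snd w x \<otimes> y" using w xX z unfolding is_multiplier_def by auto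
    moreover have "fst w y \<in> X" "snd w x \<in> X" using w xX unfolding is_multiplier_def by auto
    ultimately show ?case using I xy unfolding ideal_in_def by auto
  next
    case (span_add x y)
    have xy: "x \<in> I" "y \<in> I" using span_add(1,2) span_add(5) by (auto intro: add_span.intros)
    hence "x \<in> X" "y \<in> X" using IX by auto
    hence "fst w (x \<oplus> y) = fst w x \<oplus> fst w y" "snd w (x \<oplus> y) = snd w x \<oplus> snd w y"
      using w unfolding is_multiplier_def by auto
    moreover have "fst w x \<in> I" "fst w y \<in> I" "snd w x \<in> I" "snd w y \<in> I"
      using span_add(3,4) span_add(5) span_add(1,2) by (auto intro: add_span.intros)
    ultimately show ?case using Ia unfolding addsub_def by auto
  next
    case (span_neg x)
    have x: "x \<in> I" using span_neg(1) span_neg(3) by (auto intro: add_span.intros)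
    hence "x \<in> X" using IX by auto
    hence "fst w (\<ominus> x) = \<ominus> fst w x" "snd w (\<ominus> x) = \<ominus> snd w x" using mult_neg_w[OF X w] by auto
    moreover have "fst w x \<in> I" "snd w x \<in> I" using span_neg by (auto intro: add_span.intros)
    ultimately show ?case using Ia unfolding addsub_def by auto
  qed
qed

lemma ideal_inter: "ideal_in S I X \<Longrightarrow> ideal_in S J X \<Longrightarrow> ideal_in S (I \<inter> J) X"
  unfolding ideal_in_def addsub_def by auto

lemma set_prod_sub_right:
  assumes J: "ideal_in S J X" and IX: "I \<subseteq> X"
  shows "set_prod S I J \<subseteq> J"
  unfolding set_prod_def
  apply (rule add_span_sub)
  using J IX unfolding ideal_in_def by auto

lemma set_prod_sub_left:
  assumes J: "ideal_in S J X" and IX: "I \<subseteq> X"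
  shows "set_prod S J I \<subseteq> J"
  unfolding set_prod_def
  apply (rule add_span_sub)
  using J IX unfolding ideal_in_def by auto

lemma set_prod_gen: "x \<in> I \<Longrightarrow> y \<in> J \<Longrightarrow> x \<otimes> y \<in> set_prod S I J"
  unfolding set_prod_def by (auto intro: add_span.intros)

end

locale rng2 = S: rngl S + S': rngl S' for S (structure) and S' (structure)
begin

lemma hom_zero:
  assumes A: "addsub S A" and f: "\<forall>x\<in>A. \<forall>y\<in>A. f (x \<oplus> y) = f x \<oplus>\<^bsub>S'\<^esub> f y" and fA: "f ` A \<subseteq> carrier S'"
  shows "f \<zero> = \<zero>\<^bsub>S'\<^esub>"
  using S.addhom_zero[OF S'.rngl_axioms _ f] A fA by (auto simp: addsub_def)

lemma hom_neg:
  assumes A: "addsub S A" and f: "\<forall>x\<in>A. \<forall>y\<in>A. f (x \<oplus> y) = f x \<oplus>\<^bsub>S'\<^esub> f y" and fA: "f ` A \<subseteq> carrier S'"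
    and x: "x \<in> A"
  shows "f (\<ominus> x) = \<ominus>\<^bsub>S'\<^esub> f x"
  using S.addhom_neg[OF S'.rngl_axioms _ x _ _ f fA] A x by (auto simp: addsub_def)

lemma hom_span:
  assumes A: "addsub S A" and f: "\<forall>x\<in>A. \<forall>y\<in>A. f (x \<oplus> y) = f x \<oplus>\<^bsub>S'\<^esub> f y" and fA: "f ` A \<subseteq> carrier S'"
    and XA: "X \<subseteq> A"
  shows "f ` add_span S X = add_span S' (f ` X)"
proof -
  have spA: "add_span S X \<subseteq> A" by (rule S.add_span_sub[OF A XA])
  have "f x \<in> add_span S' (f ` X)" if "x \<in> add_span S X" for x
    using that
  proof (induction rule: add_span.induct)
    case span_zero thus ?case using hom_zero[OF A f fA] by (simp add: add_span.intros)
  next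
    case (span_gen x) thus ?case by (auto intro: add_span.intros)
  next
    case (span_add x y)
    have "x \<in> A" "y \<in> A" using span_add(1,2) spA by auto
    thus ?case using span_add f by (auto intro: add_span.intros)
  next
    case (span_neg x)
    have "x \<in> A" using span_neg(1) spA by auto
    thus ?case using span_neg hom_neg[OF A f fA] by (auto intro: add_span.intros)
  qed
  moreover have "y \<in> f ` add_span S X" if "y \<in> add_span S' (f ` X)" for y
    using that
  proof (induction rule: add_span.induct)
    case span_zero
    have "f \<zero> \<in> f ` add_span S X" by (rule imageI) (rule add_span.span_zero)
    thus ?case using hom_zero[OF A f fA] by simp
  next
    case (span_gen y) thus ?case by (auto intro: add_span.intros)
  next
    case (span_add x y)
    then obtain a b where ab: "x = f a" "y = f b" "a \<in> add_span S X" "b \<in> add_span S X" by blast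
    hence "a \<in> A" "b \<in> A" using spA by auto
    hence "x \<oplus>\<^bsub>S'\<^esub> y = f (a \<oplus> b)" using f ab by auto
    thus ?case using ab by (auto intro: add_span.intros)
  next
    case (span_neg x)
    then obtain a where ab: "x = f a" "a \<in> add_span S X" by blast
    hence "a \<in> A" using spA by auto
    hence "\<ominus>\<^bsub>S'\<^esub> x = f (\<ominus> a)" using hom_neg[OF A f fA] ab by auto
    thus ?case using ab by (auto intro: add_span.intros)
  qed
  ultimately show ?thesis by blast
qed

lemma hom_idem:
  assumes A: "addsub S A" and f: "rng_hom_on S S' A f" and fA: "f ` A \<subseteq> carrier S'"
    and IA: "I \<subseteq> A" and idem: "set_prod S I I = I"
  shows "set_prod S' (f ` I) (f ` I) = f ` I"
proof -
  have f1: "\<forall>x\<in>A. \<forall>y\<in>A. f (x \<oplus> y) = f x \<oplus>\<^bsub>S'\<^esub> f y" using f unfolding rng_hom_on_def by blast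
  have XA: "{x \<otimes> y | x y. x \<in> I \<and> y \<in> I} \<subseteq> I" using idem unfolding set_prod_def
    by (auto intro: add_span.intros)
  have img: "f ` {x \<otimes> y | x y. x \<in> I \<and> y \<in> I} = {x \<otimes>\<^bsub>S'\<^esub> y | x y. x \<in> f ` I \<and> y \<in> f ` I}"
  proof (intro equalityI subsetI)
    fix z assume "z \<in> f ` {x \<otimes> y | x y. x \<in> I \<and> y \<in> I}"
    then obtain x y where z: "z = f (x \<otimes> y)" "x \<in> I" "y \<in> I" by blast
    hence "z = f x \<otimes>\<^bsub>S'\<^esub> f y" using f IA unfolding rng_hom_on_def by blast
    thus "z \<in> {x \<otimes>\<^bsub>S'\<^esub> y | x y. x \<in> f ` I \<and> y \<in> f ` I}" using z by blast
  next
    fix z assume "z \<in> {x \<otimes>\<^bsub>S'\<^esub> y | x y. x \<in> f ` I \<and> y \<in> f ` I}"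
    then obtain x y where z: "z = f x \<otimes>\<^bsub>S'\<^esub> f y" "x \<in> I" "y \<in> I" by blast
    have "f (x \<otimes> y) = f x \<otimes>\<^bsub>S'\<^esub> f y" using f IA z(2,3) unfolding rng_hom_on_def by blast
    hence "z = f (x \<otimes> y)" using z by simp
    thus "z \<in> f ` {x \<otimes> y | x y. x \<in> I \<and> y \<in> I}" using z by blast
  qed
  have "f ` I = f ` add_span S {x \<otimes> y | x y. x \<in> I \<and> y \<in> I}" using idem by (simp add: set_prod_def)
  also have "\<dots> = add_span S' (f ` {x \<otimes> y | x y. x \<in> I \<and> y \<in> I})"
    by (rule hom_span[OF A f1 fA]) (use XA IA in auto)
  finally show ?thesis using img by (simp add: set_prod_def)
qed

lemma iso_ideal:
  assumes X: "addsub S X" and Y: "addsub S' Y" and bij: "bij_betw f X Y" and f: "rng_hom_on S S' X f"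
    and I: "ideal_in S I X"
  shows "ideal_in S' (f ` I) Y"
proof -
  have f1: "\<forall>x\<in>X. \<forall>y\<in>X. f (x \<oplus> y) = f x \<oplus>\<^bsub>S'\<^esub> f y" using f unfolding rng_hom_on_def by blast
  have fX: "f ` X \<subseteq> carrier S'" using bij Y by (auto simp: bij_betw_def addsub_def)
  have IX: "I \<subseteq> X" and Ia: "addsub S I" using I by (auto simp: ideal_in_def)
  have fY: "f ` I \<subseteq> Y" using bij IX by (auto simp: bij_betw_def)
  have ad: "addsub S' (f ` I)"
    unfolding addsub_def
  proof (intro conjI ballI)
    show "f ` I \<subseteq> carrier S'" using fY Y by (auto simp: addsub_def)
    have "f \<zero> \<in> f ` I" using Ia by (simp add: addsub_def)
    thus "\<zero>\<^bsub>S'\<^esub> \<in> f ` I" using hom_zero[OF X f1 fX] by simp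
    fix a b assume "a \<in> f ` I" "b \<in> f ` I"
    then obtain x y where "a = f x" "b = f y" "x \<in> I" "y \<in> I" by blast
    moreover have "x \<oplus> y \<in> I" using \<open>x \<in> I\<close> \<open>y \<in> I\<close> Ia unfolding addsub_def by blast
    moreover have "f (x \<oplus> y) = f x \<oplus>\<^bsub>S'\<^esub> f y" using f1 IX \<open>x \<in> I\<close> \<open>y \<in> I\<close> by blast
    ultimately show "a \<oplus>\<^bsub>S'\<^esub> b \<in> f ` I" by (metis image_eqI)
  next
    fix a assume "a \<in> f ` I"
    then obtain x where "a = f x" "x \<in> I" by blast
    moreover have "\<ominus> x \<in> I" using \<open>x \<in> I\<close> Ia unfolding addsub_def by blast
    moreover have "f (\<ominus> x) = \<ominus>\<^bsub>S'\<^esub> f x" using hom_neg[OF X f1 fX] IX \<open>x \<in> I\<close> by blast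
    ultimately show "\<ominus>\<^bsub>S'\<^esub> a \<in> f ` I" by (metis image_eqI)
  qed
  have mul: "y \<otimes>\<^bsub>S'\<^esub> a \<in> f ` I \<and> a \<otimes>\<^bsub>S'\<^esub> y \<in> f ` I" if yY: "y \<in> Y" and aI: "a \<in> f ` I" for y a
  proof -
    obtain x where x: "x \<in> X" "y = f x" using bij yY unfolding bij_betw_def by blast
    obtain b where b: "b \<in> I" "a = f b" using aI by blast
    have "y \<otimes>\<^bsub>S'\<^esub> a = f (x \<otimes> b)" "a \<otimes>\<^bsub>S'\<^esub> y = f (b \<otimes> x)" using f x b IX unfolding rng_hom_on_def by auto
    moreover have "x \<otimes> b \<in> I" "b \<otimes> x \<in> I" using I x b unfolding ideal_in_def by auto
    ultimately show ?thesis by auto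
  qed
  show ?thesis unfolding ideal_in_def using ad fY mul by blast
qed

lemma hom_finsum:
  assumes A: "addsub S A" and f: "\<forall>x\<in>A. \<forall>y\<in>A. f (x \<oplus> y) = f x \<oplus>\<^bsub>S'\<^esub> f y" and fA: "f ` A \<subseteq> carrier S'"
    and fin: "finite K" and g: "\<forall>k\<in>K. g k \<in> A"
  shows "f (finsum S g K) = finsum S' (\<lambda>k. f (g k)) K"
  using fin g
proof (induction K rule: finite_induct)
  case empty thus ?case using hom_zero[OF A f fA] by simp
next
  case (insert a K)
  have gc: "g \<in> K \<rightarrow> carrier S" "g a \<in> carrier S" using insert(4) A by (auto simp: addsub_def)
  have fgc: "(\<lambda>k. f (g k)) \<in> K \<rightarrow> carrier S'" "f (g a) \<in> carrier S'" using insert(4) fA by auto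
  have "finsum S g (insert a K) = g a \<oplus> finsum S g K"
    using S.finsum_insert[OF insert(1,2)] gc by blast
  moreover have "finsum S' (\<lambda>k. f (g k)) (insert a K) = f (g a) \<oplus>\<^bsub>S'\<^esub> finsum S' (\<lambda>k. f (g k)) K"
    using S'.finsum_insert[OF insert(1,2)] fgc by blast
  moreover have "finsum S g K \<in> A" using S.finsum_in[OF A insert(1)] insert(4) by auto
  ultimately show ?case using insert f by auto
qed

end

locale grpd = fixes G and m :: "'g \<Rightarrow> 'g \<Rightarrow> 'g" and i assumes grp: "groupoid G m i"
begin

abbreviation "dd \<equiv> gdom m i"
abbreviation "rr \<equiv> gran m i"
abbreviation "cp \<equiv> composable m i"

lemma iG[simp]: "g \<in> G \<Longrightarrow> i g \<in> G" and ii[simp]: "g \<in> G \<Longrightarrow> i (i g) = g"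
  using grp unfolding groupoid_def by auto

lemma cp_def': "cp g h \<longleftrightarrow> dd g = rr h" by (simp add: composable_def)

lemma mG[simp]: "g \<in> G \<Longrightarrow> h \<in> G \<Longrightarrow> cp g h \<Longrightarrow> m g h \<in> G"
  using grp unfolding groupoid_def by blast

lemma ax3: "g \<in> G \<Longrightarrow> h \<in> G \<Longrightarrow> cp g h \<Longrightarrow> m (i g) (m g h) = h \<and> m (m g h) (i h) = g"
  using grp unfolding groupoid_def by blast

lemma ax4: "g \<in> G \<Longrightarrow> h \<in> G \<Longrightarrow> t \<in> G \<Longrightarrow> cp g h \<Longrightarrow> cp h t \<Longrightarrow>
   cp (m g h) t \<and> cp g (m h t) \<and> m (m g h) t = m g (m h t)"
  using grp unfolding groupoid_def by blast

lemma assoc: "g \<in> G \<Longrightarrow> h \<in> G \<Longrightarrow> t \<in> G \<Longrightarrow> cp g h \<Longrightarrow> cp h t \<Longrightarrow> m (m g h) t = m g (m h t)"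
  using ax4 by blast

lemma cp_inv1[simp]: "g \<in> G \<Longrightarrow> cp g (i g)"
  by (simp add: composable_def gdom_def gran_def)
lemma cp_inv2[simp]: "g \<in> G \<Longrightarrow> cp (i g) g"
  by (simp add: composable_def gdom_def gran_def)

lemma dG[simp]: "g \<in> G \<Longrightarrow> dd g \<in> G"
  unfolding gdom_def using mG[of "i g" g] by simp
lemma rG[simp]: "g \<in> G \<Longrightarrow> rr g \<in> G"
  unfolding gran_def using mG[of g "i g"] by simp

lemma d_prod[simp]: "g \<in> G \<Longrightarrow> h \<in> G \<Longrightarrow> cp g h \<Longrightarrow> dd (m g h) = dd h"
proof -
  assume a: "g \<in> G" "h \<in> G" "cp g h"
  have "cp (m g h) (i h)" using ax4[of g h "i h"] a by simp
  thus ?thesis by (simp add: composable_def gran_def gdom_def a)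
qed

lemma r_prod[simp]: "g \<in> G \<Longrightarrow> h \<in> G \<Longrightarrow> cp g h \<Longrightarrow> rr (m g h) = rr g"
proof -
  assume a: "g \<in> G" "h \<in> G" "cp g h"
  have "cp (i g) (m g h)" using ax4[of "i g" g h] a by simp
  thus ?thesis by (simp add: composable_def gran_def gdom_def a)
qed

lemma r_mult[simp]: "g \<in> G \<Longrightarrow> m (rr g) g = g"
  using ax3[of g "i g"] by (simp add: gran_def)
lemma d_mult[simp]: "g \<in> G \<Longrightarrow> m g (dd g) = g"
  using ax3[of "i g" g] by (simp add: gdom_def)

lemma r_inv[simp]: "g \<in> G \<Longrightarrow> rr (i g) = dd g"
  by (simp add: gran_def gdom_def)
lemma d_inv[simp]: "g \<in> G \<Longrightarrow> dd (i g) = rr g"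
  by (simp add: gran_def gdom_def)

lemma d_r[simp]: "g \<in> G \<Longrightarrow> dd (rr g) = rr g"
proof -
  assume g: "g \<in> G"
  have "rr g = m g (i g)" by (simp add: gran_def)
  hence "dd (rr g) = dd (i g)" using d_prod[of g "i g"] g by simp
  thus ?thesis using g by simp
qed
lemma r_d[simp]: "g \<in> G \<Longrightarrow> rr (dd g) = dd g"
proof -
  assume g: "g \<in> G"
  have "dd g = m (i g) g" by (simp add: gdom_def)
  hence "rr (dd g) = rr (i g)" using r_prod[of "i g" g] g by simp
  thus ?thesis using g by simp
qed
lemma r_r[simp]: "g \<in> G \<Longrightarrow> rr (rr g) = rr g"
proof -
  assume g: "g \<in> G"
  have "rr g = m g (i g)" by (simp add: gran_def)
  hence "rr (rr g) = rr g" using r_prod[of g "i g"] g by simp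
  thus ?thesis .
qed
lemma d_d[simp]: "g \<in> G \<Longrightarrow> dd (dd g) = dd g"
proof -
  assume g: "g \<in> G"
  have "dd g = m (i g) g" by (simp add: gdom_def)
  hence "dd (dd g) = dd g" using d_prod[of "i g" g] g by simp
  thus ?thesis .
qed

lemma cp_r[simp]: "g \<in> G \<Longrightarrow> cp (rr g) g" by (simp add: cp_def')
lemma cp_d[simp]: "g \<in> G \<Longrightarrow> cp g (dd g)" by (simp add: cp_def')

lemma ident_d[simp]: "g \<in> G \<Longrightarrow> dd g \<in> identities G m i"
  by (simp add: identities_def)
lemma ident_r[simp]: "g \<in> G \<Longrightarrow> rr g \<in> identities G m i"
proof -
  assume g: "g \<in> G"
  have "rr g = dd (i g)" using g by simp
  thus ?thesis using g by (metis iG ident_d)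
qed
lemma identE: "e \<in> identities G m i \<Longrightarrow> e \<in> G \<and> rr e = e \<and> dd e = e"
  unfolding identities_def by auto

lemma surj_aux:
  assumes g: "g \<in> G" and h: "h \<in> G" and rh: "rr h = rr g"
  shows "cp (i h) g" "cp h (m (i h) g)" "m h (m (i h) g) = g" "rr (m (i h) g) = dd h" "m (i h) g \<in> G"
proof -
  show c1: "cp (i h) g" using h rh by (simp add: cp_def')
  show G1: "m (i h) g \<in> G" using c1 g h by simp
  show r1: "rr (m (i h) g) = dd h" using c1 g h by simp
  show "cp h (m (i h) g)" using r1 by (simp add: cp_def')
  have "m h (m (i h) g) = m (m h (i h)) g" using assoc[of h "i h" g] c1 g h by simp
  also have "\<dots> = m (rr h) g" by (simp add: gran_def)
  also have "\<dots> = g" using rh g by simp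
  finally show "m h (m (i h) g) = g" .
qed

lemma finite_pairs: "finite G \<Longrightarrow> finite {(g, h). g \<in> G \<and> h \<in> G \<and> cp g h \<and> m g h = k}"
  by (rule finite_subset[of _ "G \<times> G"]) auto

end

locale tpa = grpd G m i + rngl S for G and m :: "'g \<Rightarrow> 'g \<Rightarrow> 'g" and i and S (structure) +
  fixes D :: "'g \<Rightarrow> 'a set" and \<alpha> :: "'g \<Rightarrow> 'a \<Rightarrow> 'a" and w :: "'g \<Rightarrow> 'g \<Rightarrow> ('a \<Rightarrow> 'a) \<times> ('a \<Rightarrow> 'a)"
  assumes tpa: "twisted_partial_action G m i S D \<alpha> w"
begin

lemmas TT = tpa[unfolded twisted_partial_action_def]
lemmas T1 = TT[THEN conjunct1]
lemmas T2 = TT[THEN conjunct2, THEN conjunct1]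
lemmas T3 = TT[THEN conjunct2, THEN conjunct2, THEN conjunct1]
lemmas T4 = TT[THEN conjunct2, THEN conjunct2, THEN conjunct2, THEN conjunct1]
lemmas T5 = TT[THEN conjunct2, THEN conjunct2, THEN conjunct2, THEN conjunct2, THEN conjunct1]
lemmas T6 = TT[THEN conjunct2, THEN conjunct2, THEN conjunct2, THEN conjunct2, THEN conjunct2]

lemma Dr_ideal: "g \<in> G \<Longrightarrow> ideal_in S (D (rr g)) (carrier S)"
  using T1 rng_ideal_in by blast

lemma Dr_addsub: "g \<in> G \<Longrightarrow> addsub S (D (rr g))"
  using Dr_ideal unfolding ideal_in_def by blast

lemma D_ideal: "g \<in> G \<Longrightarrow> ideal_in S (D g) (D (rr g))"
  using T2 ideal_in_restr Dr_addsub by blast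

lemma D_addsub: "g \<in> G \<Longrightarrow> addsub S (D g)"
  using D_ideal unfolding ideal_in_def by blast

lemma D_sub_r: "g \<in> G \<Longrightarrow> D g \<subseteq> D (rr g)"
  using D_ideal unfolding ideal_in_def by blast

lemma D_carrier: "g \<in> G \<Longrightarrow> D g \<subseteq> carrier S"
  using D_addsub unfolding addsub_def by blast

lemma D_mult: "g \<in> G \<Longrightarrow> x \<in> D (rr g) \<Longrightarrow> a \<in> D g \<Longrightarrow> x \<otimes> a \<in> D g \<and> a \<otimes> x \<in> D g"
  using D_ideal unfolding ideal_in_def by blast

lemma alpha_bij: "g \<in> G \<Longrightarrow> bij_betw (\<alpha> g) (D (i g)) (D g)"
  using T3 by blast
lemma alpha_hom: "g \<in> G \<Longrightarrow> rng_hom_on S S (D (i g)) (\<alpha> g)"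
  using T3 by blast

lemma w_inv: "g \<in> G \<Longrightarrow> h \<in> G \<Longrightarrow> cp g h \<Longrightarrow> invertible_multiplier S (set_prod S (D g) (D (m g h))) (w g h)"
  using T4 by blast

lemma alpha_id: "e \<in> identities G m i \<Longrightarrow> a \<in> D e \<Longrightarrow> \<alpha> e a = a"
  using T5 by blast

lemma big: "g \<in> G \<Longrightarrow> h \<in> G \<Longrightarrow> t \<in> G \<Longrightarrow> cp g h \<Longrightarrow> cp h t \<Longrightarrow>
        set_prod S (D g) (D g) = D g \<and>
        set_prod S (D g) (D h) = set_prod S (D h) (D g) \<and>
        \<alpha> g ` set_prod S (D (i g)) (D h) = set_prod S (D g) (D (m g h)) \<and>
        (\<forall>a\<in>set_prod S (D (i h)) (D (m (i h) (i g))). \<forall>w'.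
            mult_inverse S (set_prod S (D g) (D (m g h))) (w g h) w' \<longrightarrow>
            \<alpha> g (\<alpha> h a) = fst w' (snd (w g h) (\<alpha> (m g h) a))) \<and>
        (\<forall>a\<in>D g. fst (w (rr g) g) a = a \<and> snd (w (rr g) g) a = a \<and>
                  fst (w g (dd g)) a = a \<and> snd (w g (dd g)) a = a) \<and>
        (\<forall>a\<in>set_prod S (set_prod S (D (i g)) (D h)) (D (m h t)).
            fst (w g (m h t)) (\<alpha> g (fst (w h t) a)) =
            fst (w (m g h) t) (fst (w g h) (\<alpha> g a)))"
  apply (rule T6[rule_format]) by simp_all

lemma idem: "g \<in> G \<Longrightarrow> set_prod S (D g) (D g) = D g"
  using big[of g "dd g" "dd g", THEN conjunct1] by (simp add: cp_def')

lemma comm: "g \<in> G \<Longrightarrow> h \<in> G \<Longrightarrow> cp g h \<Longrightarrow> set_prod S (D g) (D h) = set_prod S (D h) (D g)"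
  using big[of g h "dd h", THEN conjunct2, THEN conjunct1] by (simp add: cp_def')

lemma alpha_img: "g \<in> G \<Longrightarrow> h \<in> G \<Longrightarrow> cp g h \<Longrightarrow> \<alpha> g ` set_prod S (D (i g)) (D h) = set_prod S (D g) (D (m g h))"
  using big[of g h "dd h", THEN conjunct2, THEN conjunct2, THEN conjunct1] by (simp add: cp_def')

lemma conj: "g \<in> G \<Longrightarrow> h \<in> G \<Longrightarrow> cp g h \<Longrightarrow> a \<in> set_prod S (D (i h)) (D (m (i h) (i g))) \<Longrightarrow>
   mult_inverse S (set_prod S (D g) (D (m g h))) (w g h) w' \<Longrightarrow>
   \<alpha> g (\<alpha> h a) = fst w' (snd (w g h) (\<alpha> (m g h) a))"
  using big[of g h "dd h", THEN conjunct2, THEN conjunct2, THEN conjunct2, THEN conjunct1] by (simp add: cp_def' del: split_paired_All)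

lemma unit: "g \<in> G \<Longrightarrow> a \<in> D g \<Longrightarrow> fst (w (rr g) g) a = a \<and> snd (w (rr g) g) a = a \<and>
                  fst (w g (dd g)) a = a \<and> snd (w g (dd g)) a = a"
  using big[of g "dd g" "dd g", THEN conjunct2, THEN conjunct2, THEN conjunct2, THEN conjunct2, THEN conjunct1] by (simp add: cp_def')

lemma cocycle: "g \<in> G \<Longrightarrow> h \<in> G \<Longrightarrow> t \<in> G \<Longrightarrow> cp g h \<Longrightarrow> cp h t \<Longrightarrow>
  a \<in> set_prod S (set_prod S (D (i g)) (D h)) (D (m h t)) \<Longrightarrow>
  fst (w g (m h t)) (\<alpha> g (fst (w h t) a)) = fst (w (m g h) t) (fst (w g h) (\<alpha> g a))"
  using big[of g h t, THEN conjunct2, THEN conjunct2, THEN conjunct2, THEN conjunct2, THEN conjunct2] by blast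

lemma D_inv: "g \<in> G \<Longrightarrow> D (i g) \<subseteq> D (dd g)"
  using D_sub_r[of "i g"] by simp

lemma alpha_add: "g \<in> G \<Longrightarrow> x \<in> D (i g) \<Longrightarrow> y \<in> D (i g) \<Longrightarrow> \<alpha> g (x \<oplus> y) = \<alpha> g x \<oplus> \<alpha> g y"
  using alpha_hom unfolding rng_hom_on_def by blast
lemma alpha_mul: "g \<in> G \<Longrightarrow> x \<in> D (i g) \<Longrightarrow> y \<in> D (i g) \<Longrightarrow> \<alpha> g (x \<otimes> y) = \<alpha> g x \<otimes> \<alpha> g y"
  using alpha_hom unfolding rng_hom_on_def by blast

lemma alpha_in: "g \<in> G \<Longrightarrow> x \<in> D (i g) \<Longrightarrow> \<alpha> g x \<in> D g"
  using alpha_bij unfolding bij_betw_def by blast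

lemma ainv_in: "g \<in> G \<Longrightarrow> x \<in> D g \<Longrightarrow> inv_into (D (i g)) (\<alpha> g) x \<in> D (i g)"
  using alpha_bij by (metis bij_betw_def inv_into_into)
lemma alpha_ainv: "g \<in> G \<Longrightarrow> x \<in> D g \<Longrightarrow> \<alpha> g (inv_into (D (i g)) (\<alpha> g) x) = x"
  using alpha_bij by (metis bij_betw_def f_inv_into_f)
lemma ainv_alpha: "g \<in> G \<Longrightarrow> x \<in> D (i g) \<Longrightarrow> inv_into (D (i g)) (\<alpha> g) (\<alpha> g x) = x"
  using alpha_bij by (metis bij_betw_def inv_into_f_f)

lemma alpha_zero: "g \<in> G \<Longrightarrow> \<alpha> g \<zero> = \<zero>"
proof -
  assume g: "g \<in> G"
  have "addsub S (D (i g))" using g D_addsub by simp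
  moreover have "\<alpha> g ` D (i g) \<subseteq> carrier S" using alpha_in D_carrier g by blast
  ultimately show ?thesis using rng2.hom_zero[of S S "D (i g)" "\<alpha> g"] alpha_add g
    by (simp add: rng2_def rngl_axioms)
qed

lemma ainv_zero: "g \<in> G \<Longrightarrow> inv_into (D (i g)) (\<alpha> g) \<zero> = \<zero>"
proof -
  assume g: "g \<in> G"
  have "\<zero> \<in> D (i g)" using D_addsub[of "i g"] g by (simp add: addsub_def)
  thus ?thesis using ainv_alpha[of g \<zero>] alpha_zero g by simp
qed

lemma ainv_add: "g \<in> G \<Longrightarrow> x \<in> D g \<Longrightarrow> y \<in> D g \<Longrightarrow>
  inv_into (D (i g)) (\<alpha> g) (x \<oplus> y) = inv_into (D (i g)) (\<alpha> g) x \<oplus> inv_into (D (i g)) (\<alpha> g) y"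
proof -
  assume g: "g \<in> G" and xy: "x \<in> D g" "y \<in> D g"
  let ?x = "inv_into (D (i g)) (\<alpha> g) x" and ?y = "inv_into (D (i g)) (\<alpha> g) y"
  have inn: "?x \<in> D (i g)" "?y \<in> D (i g)" using ainv_in g xy by auto
  have s: "?x \<oplus> ?y \<in> D (i g)" using inn D_addsub[of "i g"] g by (simp add: addsub_def)
  have "\<alpha> g (?x \<oplus> ?y) = x \<oplus> y" using alpha_add[OF g inn] alpha_ainv g xy by simp
  thus ?thesis using ainv_alpha[OF g s] by simp
qed

lemma w_mult: "g \<in> G \<Longrightarrow> h \<in> G \<Longrightarrow> cp g h \<Longrightarrow> is_multiplier S (set_prod S (D g) (D (m g h))) (w g h)"
  using w_inv unfolding invertible_multiplier_def by blast

end

locale gtpa = tpa +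
  assumes glob: "global_action G m i D"
begin

lemma Dg: "g \<in> G \<Longrightarrow> D g = D (rr g)"
  using glob unfolding global_action_def by blast

lemma D_inv_eq: "g \<in> G \<Longrightarrow> D (i g) = D (dd g)"
  using Dg[of "i g"] by simp

lemma sp_r: "g \<in> G \<Longrightarrow> set_prod S (D (rr g)) (D (rr g)) = D (rr g)"
  using idem[of "rr g"] by simp

lemma sp_gh: "g \<in> G \<Longrightarrow> h \<in> G \<Longrightarrow> cp g h \<Longrightarrow> set_prod S (D g) (D (m g h)) = D (rr g)"
  using sp_r[of g] Dg[of g] Dg[of "m g h"] by simp

lemma wm: "g \<in> G \<Longrightarrow> h \<in> G \<Longrightarrow> cp g h \<Longrightarrow> is_multiplier S (D (rr g)) (w g h)"
  using w_mult sp_gh by simp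

lemma winv: "g \<in> G \<Longrightarrow> h \<in> G \<Longrightarrow> cp g h \<Longrightarrow> \<exists>w'. mult_inverse S (D (rr g)) (w g h) w'"
  using w_inv sp_gh unfolding invertible_multiplier_def by simp

end

definition fam :: "('a,'c) ring_scheme \<Rightarrow> 'g set \<Rightarrow> ('g \<Rightarrow> 'a set) \<Rightarrow> ('g \<Rightarrow> 'a) set" where
  "fam S G C = {f. (\<forall>g\<in>G. f g \<in> C g) \<and> (\<forall>g. g \<notin> G \<longrightarrow> f g = \<zero>\<^bsub>S\<^esub>)}"

definition delta :: "('a,'c) ring_scheme \<Rightarrow> 'g \<Rightarrow> 'a \<Rightarrow> 'g \<Rightarrow> 'a" where
  "delta S g a = (\<lambda>k. if k = g then a else \<zero>\<^bsub>S\<^esub>)"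

context rngl begin

lemma fam_abelian:
  fixes X :: "('g \<Rightarrow> 'a, 'e) ring_scheme"
  assumes C: "\<forall>g\<in>G. addsub S (C g)" and cX: "carrier X = fam S G C"
    and aX: "add X = (\<lambda>f f' g. f g \<oplus> f' g)" and zX: "zero X = (\<lambda>_. \<zero>)"
  shows "abelian_group X"
proof (rule abelian_groupI)
  have Cc: "\<And>g x. g \<in> G \<Longrightarrow> x \<in> C g \<Longrightarrow> x \<in> carrier S" using C by (auto simp: addsub_def)
  fix x y z assume x: "x \<in> carrier X" and y: "y \<in> carrier X" and z: "z \<in> carrier X"
  show "x \<oplus>\<^bsub>X\<^esub> y \<in> carrier X" using x y C unfolding cX aX fam_def addsub_def by auto
  show "(x \<oplus>\<^bsub>X\<^esub> y) \<oplus>\<^bsub>X\<^esub> z = x \<oplus>\<^bsub>X\<^esub> (y \<oplus>\<^bsub>X\<^esub> z)"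
    unfolding aX
  proof
    fix g show "x g \<oplus> y g \<oplus> z g = x g \<oplus> (y g \<oplus> z g)"
      using x y z Cc unfolding cX fam_def by (cases "g \<in> G") (auto simp: a_assoc)
  qed
  show "x \<oplus>\<^bsub>X\<^esub> y = y \<oplus>\<^bsub>X\<^esub> x"
    unfolding aX
  proof
    fix g show "x g \<oplus> y g = y g \<oplus> x g"
      using x y Cc unfolding cX fam_def by (cases "g \<in> G") (auto simp: a_comm)
  qed
  show "\<zero>\<^bsub>X\<^esub> \<oplus>\<^bsub>X\<^esub> x = x"
    unfolding aX zX
  proof
    fix g show "\<zero> \<oplus> x g = x g"
      using x Cc unfolding cX fam_def by (cases "g \<in> G") auto
  qed
  show "\<exists>y\<in>carrier X. y \<oplus>\<^bsub>X\<^esub> x = \<zero>\<^bsub>X\<^esub>"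
  proof (intro bexI)
    show "(\<lambda>g. \<ominus> x g) \<oplus>\<^bsub>X\<^esub> x = \<zero>\<^bsub>X\<^esub>"
      unfolding aX zX
    proof
      fix g show "\<ominus> x g \<oplus> x g = \<zero>"
        using x Cc unfolding cX fam_def by (cases "g \<in> G") (auto simp: l_neg)
    qed
    show "(\<lambda>g. \<ominus> x g) \<in> carrier X" using x C unfolding cX fam_def addsub_def by auto
  qed
next
  show "\<zero>\<^bsub>X\<^esub> \<in> carrier X" using C unfolding cX zX fam_def addsub_def by auto
qed

lemma fam_neg:
  fixes X :: "('g \<Rightarrow> 'a, 'e) ring_scheme"
  assumes C: "\<forall>g\<in>G. addsub S (C g)" and cX: "carrier X = fam S G C"
    and aX: "add X = (\<lambda>f f' g. f g \<oplus> f' g)" and zX: "zero X = (\<lambda>_. \<zero>)"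
    and x: "x \<in> carrier X"
  shows "\<ominus>\<^bsub>X\<^esub> x = (\<lambda>g. \<ominus> x g)"
proof -
  interpret X: abelian_group X by (rule fam_abelian[OF C cX aX zX])
  have Cc: "\<And>g x. g \<in> G \<Longrightarrow> x \<in> C g \<Longrightarrow> x \<in> carrier S" using C by (auto simp: addsub_def)
  have inn: "(\<lambda>g. \<ominus> x g) \<in> carrier X" using x C unfolding cX fam_def addsub_def by auto
  have "(\<lambda>g. \<ominus> x g) \<oplus>\<^bsub>X\<^esub> x = \<zero>\<^bsub>X\<^esub>"
    unfolding aX zX
  proof
    fix g show "\<ominus> x g \<oplus> x g = \<zero>"
      using x Cc unfolding cX fam_def by (cases "g \<in> G") (auto simp: l_neg)
  qed
  thus ?thesis using X.minus_equality[OF _ x inn] by simp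
qed

end

locale cpl = tpa + assumes finG: "finite G"
begin

abbreviation "CP \<equiv> crossed_product G m i S D \<alpha> w"
abbreviation "pairs k \<equiv> {(g, h). g \<in> G \<and> h \<in> G \<and> cp g h \<and> m g h = k}"
definition ct where
  "ct g h a b = fst (w g h) (\<alpha> g (inv_into (D (i g)) (\<alpha> g) a \<otimes> b))"

lemma CP_carrier: "carrier CP = fam S G D" by (simp add: crossed_product_def fam_def)
lemma CP_add: "add CP = (\<lambda>f f' g. f g \<oplus> f' g)" by (simp add: crossed_product_def)
lemma CP_zero: "zero CP = (\<lambda>_. \<zero>)" by (simp add: crossed_product_def)
lemma CP_mult: "f \<otimes>\<^bsub>CP\<^esub> f' = (\<lambda>k. finsum S (\<lambda>p. ct (fst p) (snd p) (f (fst p)) (f' (snd p))) (pairs k))"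
  by (simp add: crossed_product_def ct_def)

lemma D_addsub_all: "\<forall>g\<in>G. addsub S (D g)" using D_addsub by blast

lemma CP_abelian: "abelian_group CP"
  by (rule fam_abelian[OF D_addsub_all CP_carrier CP_add CP_zero])

lemma CP_neg: "f \<in> carrier CP \<Longrightarrow> \<ominus>\<^bsub>CP\<^esub> f = (\<lambda>g. \<ominus> f g)"
  by (rule fam_neg[OF D_addsub_all CP_carrier CP_add CP_zero])

lemma fin_pairs: "finite (pairs k)" using finite_pairs[OF finG] .

lemma ainv_prod_in:
  assumes g: "g \<in> G" and h: "h \<in> G" and c: "cp g h" and a: "a \<in> D g" and b: "b \<in> D h"
  shows "inv_into (D (i g)) (\<alpha> g) a \<otimes> b \<in> D (i g)"
    "inv_into (D (i g)) (\<alpha> g) a \<otimes> b \<in> set_prod S (D (i g)) (D h)"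
proof -
  have a': "inv_into (D (i g)) (\<alpha> g) a \<in> D (i g)" using ainv_in g a by simp
  have "b \<in> D (rr (i g))" using D_sub_r[OF h] b c g by (auto simp: cp_def')
  thus "inv_into (D (i g)) (\<alpha> g) a \<otimes> b \<in> D (i g)" using D_mult[of "i g"] a' g by simp
  show "inv_into (D (i g)) (\<alpha> g) a \<otimes> b \<in> set_prod S (D (i g)) (D h)"
    using a' b by (rule set_prod_gen)
qed

lemma sp_sub: "g \<in> G \<Longrightarrow> h \<in> G \<Longrightarrow> cp g h \<Longrightarrow> set_prod S (D g) (D (m g h)) \<subseteq> D (m g h)"
  apply (rule set_prod_sub_right[OF D_ideal[of "m g h"]])
  using D_sub_r[of g] by auto

lemma sp_addsub: "addsub S (set_prod S X Y)" if "X \<subseteq> carrier S" "Y \<subseteq> carrier S"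
  unfolding set_prod_def apply (rule addsub_span) using that by auto

lemma spD_addsub: "g \<in> G \<Longrightarrow> h \<in> G \<Longrightarrow> addsub S (set_prod S (D g) (D h))"
  by (rule sp_addsub) (auto dest: D_carrier)

lemma alpha_prod_in:
  assumes g: "g \<in> G" and h: "h \<in> G" and c: "cp g h" and a: "a \<in> D g" and b: "b \<in> D h"
  shows "\<alpha> g (inv_into (D (i g)) (\<alpha> g) a \<otimes> b) \<in> set_prod S (D g) (D (m g h))"
  using alpha_img[OF g h c] ainv_prod_in(2)[OF assms] by blast

lemma ct_in_sp:
  assumes g: "g \<in> G" and h: "h \<in> G" and c: "cp g h" and a: "a \<in> D g" and b: "b \<in> D h"
  shows "ct g h a b \<in> set_prod S (D g) (D (m g h))"
  using w_mult[OF g h c] alpha_prod_in[OF assms] unfolding ct_def is_multiplier_def by blast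

lemma ct_in:
  assumes g: "g \<in> G" and h: "h \<in> G" and c: "cp g h" and a: "a \<in> D g" and b: "b \<in> D h"
  shows "ct g h a b \<in> D (m g h)"
  using ct_in_sp[OF assms] sp_sub[OF g h c] by blast

lemma ct_zero1:
  assumes g: "g \<in> G" and h: "h \<in> G" and c: "cp g h" and b: "b \<in> D h"
  shows "ct g h \<zero> b = \<zero>"
proof -
  have bc: "b \<in> carrier S" using b D_carrier h by blast
  have "ct g h \<zero> b = fst (w g h) \<zero>" unfolding ct_def using ainv_zero g bc alpha_zero by simp
  also have "\<dots> = \<zero>" using mult_zero_w[OF spD_addsub w_mult[OF g h c]] g h c by simp
  finally show ?thesis .
qed

lemma ct_zero2:
  assumes g: "g \<in> G" and h: "h \<in> G" and c: "cp g h" and a: "a \<in> D g"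
  shows "ct g h a \<zero> = \<zero>"
proof -
  have ac: "inv_into (D (i g)) (\<alpha> g) a \<in> carrier S" using ainv_in[OF g a] D_carrier[of "i g"] iG[OF g] by blast
  have "ct g h a \<zero> = fst (w g h) \<zero>" unfolding ct_def using ac g alpha_zero by simp
  also have "\<dots> = \<zero>" using mult_zero_w[OF spD_addsub w_mult[OF g h c]] g h c by simp
  finally show ?thesis .
qed

lemma ct_add1:
  assumes g: "g \<in> G" and h: "h \<in> G" and c: "cp g h" and a: "a \<in> D g" "a' \<in> D g" and b: "b \<in> D h"
  shows "ct g h (a \<oplus> a') b = ct g h a b \<oplus> ct g h a' b"
proof -
  let ?x = "inv_into (D (i g)) (\<alpha> g) a" and ?x' = "inv_into (D (i g)) (\<alpha> g) a'"
  have xc: "?x \<in> carrier S" "?x' \<in> carrier S" using ainv_in[OF g] a D_carrier[of "i g"] iG[OF g] by blast+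
  have bc: "b \<in> carrier S" using b D_carrier h by blast
  have p1: "?x \<otimes> b \<in> D (i g)" "?x' \<otimes> b \<in> D (i g)" using ainv_prod_in(1)[OF g h c] a b by auto
  have "ct g h (a \<oplus> a') b = fst (w g h) (\<alpha> g (?x \<otimes> b \<oplus> ?x' \<otimes> b))"
    unfolding ct_def using ainv_add[OF g a] l_distr xc bc by simp
  also have "\<dots> = fst (w g h) (\<alpha> g (?x \<otimes> b) \<oplus> \<alpha> g (?x' \<otimes> b))" using alpha_add[OF g p1] by simp
  also have "\<dots> = ct g h a b \<oplus> ct g h a' b" unfolding ct_def
    using w_mult[OF g h c] alpha_prod_in[OF g h c] a b unfolding is_multiplier_def by blast
  finally show ?thesis .
qed

lemma ct_add2:
  assumes g: "g \<in> G" and h: "h \<in> G" and c: "cp g h" and a: "a \<in> D g" and b: "b \<in> D h" "b' \<in> D h"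
  shows "ct g h a (b \<oplus> b') = ct g h a b \<oplus> ct g h a b'"
proof -
  let ?x = "inv_into (D (i g)) (\<alpha> g) a"
  have xc: "?x \<in> carrier S" using ainv_in[OF g] a D_carrier[of "i g"] iG[OF g] by blast
  have bc: "b \<in> carrier S" "b' \<in> carrier S" using b D_carrier h by blast+
  have p1: "?x \<otimes> b \<in> D (i g)" "?x \<otimes> b' \<in> D (i g)" using ainv_prod_in(1)[OF g h c] a b by auto
  have "ct g h a (b \<oplus> b') = fst (w g h) (\<alpha> g (?x \<otimes> b \<oplus> ?x \<otimes> b'))"
    unfolding ct_def using r_distr xc bc by simp
  also have "\<dots> = fst (w g h) (\<alpha> g (?x \<otimes> b) \<oplus> \<alpha> g (?x \<otimes> b'))" using alpha_add[OF g p1] by simp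
  also have "\<dots> = ct g h a b \<oplus> ct g h a b'" unfolding ct_def
    using w_mult[OF g h c] alpha_prod_in[OF g h c] a b unfolding is_multiplier_def by blast
  finally show ?thesis .
qed

lemma pairsD: "p \<in> pairs k \<Longrightarrow> fst p \<in> G \<and> snd p \<in> G \<and> cp (fst p) (snd p) \<and> m (fst p) (snd p) = k"
  by auto

lemma fam_mult:
  assumes C1: "\<forall>g\<in>G. C1 g \<subseteq> D g" and C2: "\<forall>g\<in>G. C2 g \<subseteq> D g" and C3: "\<forall>k\<in>G. addsub S (C3 k)"
    and ctC: "\<And>g h a b. g \<in> G \<Longrightarrow> h \<in> G \<Longrightarrow> cp g h \<Longrightarrow> a \<in> C1 g \<Longrightarrow> b \<in> C2 h \<Longrightarrow> ct g h a b \<in> C3 (m g h)"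
    and f: "f \<in> fam S G C1" and f': "f' \<in> fam S G C2"
  shows "f \<otimes>\<^bsub>CP\<^esub> f' \<in> fam S G C3"
  unfolding fam_def CP_mult
proof (intro CollectI conjI ballI allI impI)
  fix k assume k: "k \<in> G"
  show "finsum S (\<lambda>p. ct (fst p) (snd p) (f (fst p)) (f' (snd p))) (pairs k) \<in> C3 k"
    apply (rule finsum_in[OF _ fin_pairs])
    using C3 k apply blast
  proof
    fix p assume p: "p \<in> pairs k"
    obtain g h where gh: "p = (g, h)" "g \<in> G" "h \<in> G" "cp g h" "m g h = k" using p by blast
    have "f g \<in> C1 g" "f' h \<in> C2 h" using f f' gh unfolding fam_def by auto
    hence "ct g h (f g) (f' h) \<in> C3 (m g h)" using ctC gh by blast
    thus "ct (fst p) (snd p) (f (fst p)) (f' (snd p)) \<in> C3 k" using gh by simp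
  qed
next
  fix k assume k: "k \<notin> G"
  have e: "pairs k = {}" using k by auto
  show "finsum S (\<lambda>p. ct (fst p) (snd p) (f (fst p)) (f' (snd p))) (pairs k) = \<zero>" unfolding e by simp
qed

lemma CP_mult_closed: "f \<in> carrier CP \<Longrightarrow> f' \<in> carrier CP \<Longrightarrow> f \<otimes>\<^bsub>CP\<^esub> f' \<in> carrier CP"
  unfolding CP_carrier
  apply (rule fam_mult)
  using D_addsub ct_in by auto

lemma ct_carrier: "f \<in> carrier CP \<Longrightarrow> f' \<in> carrier CP \<Longrightarrow>
   (\<lambda>p. ct (fst p) (snd p) (f (fst p)) (f' (snd p))) \<in> pairs k \<rightarrow> carrier S"
proof
  fix p assume f: "f \<in> carrier CP" and f': "f' \<in> carrier CP" and p: "p \<in> pairs k"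
  obtain g h where gh: "p = (g, h)" "g \<in> G" "h \<in> G" "cp g h" "m g h = k" using p by blast
  have "f g \<in> D g" "f' h \<in> D h" using f f' gh unfolding CP_carrier fam_def by auto
  hence "ct g h (f g) (f' h) \<in> D (m g h)" using ct_in gh by blast
  thus "ct (fst p) (snd p) (f (fst p)) (f' (snd p)) \<in> carrier S" using gh D_carrier[of "m g h"] by auto
qed

lemma CP_rdistr:
  assumes f: "f \<in> carrier CP" and f1: "f1 \<in> carrier CP" and f2: "f2 \<in> carrier CP"
  shows "f \<otimes>\<^bsub>CP\<^esub> (f1 \<oplus>\<^bsub>CP\<^esub> f2) = f \<otimes>\<^bsub>CP\<^esub> f1 \<oplus>\<^bsub>CP\<^esub> f \<otimes>\<^bsub>CP\<^esub> f2"
  unfolding CP_mult CP_add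
proof
  fix k
  have "finsum S (\<lambda>p. ct (fst p) (snd p) (f (fst p)) (f1 (snd p) \<oplus> f2 (snd p))) (pairs k)
      = finsum S (\<lambda>p. ct (fst p) (snd p) (f (fst p)) (f1 (snd p)) \<oplus> ct (fst p) (snd p) (f (fst p)) (f2 (snd p))) (pairs k)"
    apply (rule finsum_cong')
      apply simp
    using ct_carrier[OF f f1, of k] ct_carrier[OF f f2, of k] apply (intro Pi_I a_closed) apply (blast dest: funcset_mem)+
  proof -
    fix p assume p: "p \<in> pairs k"
    obtain g h where gh: "p = (g, h)" "g \<in> G" "h \<in> G" "cp g h" "m g h = k" using p by blast
    have "f g \<in> D g" "f1 h \<in> D h" "f2 h \<in> D h" using f f1 f2 gh unfolding CP_carrier fam_def by auto
    thus "ct (fst p) (snd p) (f (fst p)) (f1 (snd p) \<oplus> f2 (snd p)) =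
      ct (fst p) (snd p) (f (fst p)) (f1 (snd p)) \<oplus> ct (fst p) (snd p) (f (fst p)) (f2 (snd p))"
      using ct_add2 gh by simp
  qed
  also have "\<dots> = finsum S (\<lambda>p. ct (fst p) (snd p) (f (fst p)) (f1 (snd p))) (pairs k) \<oplus>
                  finsum S (\<lambda>p. ct (fst p) (snd p) (f (fst p)) (f2 (snd p))) (pairs k)"
    by (rule finsum_addf) (use ct_carrier[OF f f1] ct_carrier[OF f f2] in auto)
  finally show "finsum S (\<lambda>p. ct (fst p) (snd p) (f (fst p)) (f1 (snd p) \<oplus> f2 (snd p))) (pairs k)
     = finsum S (\<lambda>p. ct (fst p) (snd p) (f (fst p)) (f1 (snd p))) (pairs k) \<oplus>
                  finsum S (\<lambda>p. ct (fst p) (snd p) (f (fst p)) (f2 (snd p))) (pairs k)" .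
qed

lemma CP_ldistr:
  assumes f: "f \<in> carrier CP" and f1: "f1 \<in> carrier CP" and f2: "f2 \<in> carrier CP"
  shows "(f1 \<oplus>\<^bsub>CP\<^esub> f2) \<otimes>\<^bsub>CP\<^esub> f = f1 \<otimes>\<^bsub>CP\<^esub> f \<oplus>\<^bsub>CP\<^esub> f2 \<otimes>\<^bsub>CP\<^esub> f"
  unfolding CP_mult CP_add
proof
  fix k
  have "finsum S (\<lambda>p. ct (fst p) (snd p) (f1 (fst p) \<oplus> f2 (fst p)) (f (snd p))) (pairs k)
      = finsum S (\<lambda>p. ct (fst p) (snd p) (f1 (fst p)) (f (snd p)) \<oplus> ct (fst p) (snd p) (f2 (fst p)) (f (snd p))) (pairs k)"
    apply (rule finsum_cong')
      apply simp
    using ct_carrier[OF f1 f, of k] ct_carrier[OF f2 f, of k] apply (intro Pi_I a_closed) apply (blast dest: funcset_mem)+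
  proof -
    fix p assume p: "p \<in> pairs k"
    obtain g h where gh: "p = (g, h)" "g \<in> G" "h \<in> G" "cp g h" "m g h = k" using p by blast
    have "f h \<in> D h" "f1 g \<in> D g" "f2 g \<in> D g" using f f1 f2 gh unfolding CP_carrier fam_def by auto
    thus "ct (fst p) (snd p) (f1 (fst p) \<oplus> f2 (fst p)) (f (snd p)) =
      ct (fst p) (snd p) (f1 (fst p)) (f (snd p)) \<oplus> ct (fst p) (snd p) (f2 (fst p)) (f (snd p))"
      using ct_add1 gh by simp
  qed
  also have "\<dots> = finsum S (\<lambda>p. ct (fst p) (snd p) (f1 (fst p)) (f (snd p))) (pairs k) \<oplus>
                  finsum S (\<lambda>p. ct (fst p) (snd p) (f2 (fst p)) (f (snd p))) (pairs k)"
    by (rule finsum_addf) (use ct_carrier[OF f1 f] ct_carrier[OF f2 f] in auto)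
  finally show "finsum S (\<lambda>p. ct (fst p) (snd p) (f1 (fst p) \<oplus> f2 (fst p)) (f (snd p))) (pairs k)
     = finsum S (\<lambda>p. ct (fst p) (snd p) (f1 (fst p)) (f (snd p))) (pairs k) \<oplus>
                  finsum S (\<lambda>p. ct (fst p) (snd p) (f2 (fst p)) (f (snd p))) (pairs k)" .
qed

end

context cpl begin

lemma neg_zero[simp]: "\<ominus> \<zero> = \<zero>"
  using minus_equality[of \<zero> \<zero>] by simp

lemma zeroD: "g \<in> G \<Longrightarrow> \<zero> \<in> D g" using D_addsub by (simp add: addsub_def)

lemma zero_CP: "zero CP \<in> carrier CP"
  unfolding CP_carrier CP_zero fam_def using zeroD by auto

lemma CP_mult_zero1: "f \<in> carrier CP \<Longrightarrow> zero CP \<otimes>\<^bsub>CP\<^esub> f = zero CP"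
  unfolding CP_mult CP_zero
proof
  fix k assume f: "f \<in> carrier CP"
  have "finsum S (\<lambda>p. ct (fst p) (snd p) \<zero> (f (snd p))) (pairs k) = finsum S (\<lambda>p. \<zero>) (pairs k)"
    apply (rule finsum_cong') apply simp apply simp
    using ct_zero1 f unfolding CP_carrier fam_def by auto
  thus "finsum S (\<lambda>p. ct (fst p) (snd p) \<zero> (f (snd p))) (pairs k) = \<zero>" by simp
qed

lemma CP_mult_zero2: "f \<in> carrier CP \<Longrightarrow> f \<otimes>\<^bsub>CP\<^esub> zero CP = zero CP"
  unfolding CP_mult CP_zero
proof
  fix k assume f: "f \<in> carrier CP"
  have "finsum S (\<lambda>p. ct (fst p) (snd p) (f (fst p)) \<zero>) (pairs k) = finsum S (\<lambda>p. \<zero>) (pairs k)"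
    apply (rule finsum_cong') apply simp apply simp
    using ct_zero2 f unfolding CP_carrier fam_def by auto
  thus "finsum S (\<lambda>p. ct (fst p) (snd p) (f (fst p)) \<zero>) (pairs k) = \<zero>" by simp
qed

lemma delta_in: "g \<in> G \<Longrightarrow> a \<in> D g \<Longrightarrow> delta S g a \<in> carrier CP"
  unfolding CP_carrier fam_def delta_def using zeroD by auto

lemma delta_app: "delta S g a k = (if k = g then a else \<zero>)" by (simp add: delta_def)

lemma delta_in_D: "g \<in> G \<Longrightarrow> a \<in> D g \<Longrightarrow> k \<in> G \<Longrightarrow> delta S g a k \<in> D k"
  unfolding delta_def using zeroD by auto

lemma delta_single:
  assumes g: "g \<in> G" and h: "h \<in> G" and a: "a \<in> D g" and b: "b \<in> D h"
  shows "delta S g a \<otimes>\<^bsub>CP\<^esub> delta S h b = (if cp g h then delta S (m g h) (ct g h a b) else zero CP)"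
  unfolding CP_mult
proof
  fix k
  have tm: "ct (fst p) (snd p) (delta S g a (fst p)) (delta S h b (snd p)) =
     (if (g, h) = p then ct g h a b else \<zero>)" if p: "p \<in> pairs k" for p
  proof -
    obtain x y where xy: "p = (x, y)" "x \<in> G" "y \<in> G" "cp x y" "m x y = k" using p by blast
    show ?thesis
    proof (cases "x = g")
      case True
      show ?thesis
      proof (cases "y = h")
        case True thus ?thesis using xy \<open>x = g\<close> by (simp add: delta_def)
      next
        case False
        have "ct x y (delta S g a x) \<zero> = \<zero>" using ct_zero2 xy delta_in_D g a by blast
        thus ?thesis using xy False by (simp add: delta_def)
      qed
    next
      case False
      have "ct x y \<zero> (delta S h b y) = \<zero>" using ct_zero1 xy delta_in_D h b by blast
      thus ?thesis using xy False by (simp add: delta_def)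
    qed
  qed
  have sum: "finsum S (\<lambda>p. ct (fst p) (snd p) (delta S g a (fst p)) (delta S h b (snd p))) (pairs k)
     = finsum S (\<lambda>p. if (g, h) = p then ct g h a b else \<zero>) (pairs k)"
  proof (rule finsum_cong')
    have ctc: "cp g h \<Longrightarrow> ct g h a b \<in> carrier S" using ct_in[OF g h _ a b] D_carrier[of "m g h"] mG[OF g h] g h by blast
    show "(\<lambda>p. if (g, h) = p then ct g h a b else \<zero>) \<in> pairs k \<rightarrow> carrier S" using ctc by auto
  qed (use tm in auto)
  show "finsum S (\<lambda>p. ct (fst p) (snd p) (delta S g a (fst p)) (delta S h b (snd p))) (pairs k) =
      (if cp g h then delta S (m g h) (ct g h a b) else zero CP) k"
  proof (cases "cp g h \<and> m g h = k")
    case True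
    hence inn: "(g, h) \<in> pairs k" using g h by auto
    have "ct g h a b \<in> carrier S" using ct_in[OF g h _ a b] D_carrier[of "m g h"] mG[OF g h] True by blast
    hence "(\<lambda>p. ct g h a b) \<in> pairs k \<rightarrow> carrier S" by blast
    hence "finsum S (\<lambda>p. if (g, h) = p then ct g h a b else \<zero>) (pairs k) = ct g h a b"
      using finsum_singleton[OF inn fin_pairs, of "\<lambda>p. ct g h a b"] by simp
    thus ?thesis using sum True by (simp add: delta_def)
  next
    case False
    have "finsum S (\<lambda>p. if (g, h) = p then ct g h a b else \<zero>) (pairs k) = finsum S (\<lambda>p. \<zero>) (pairs k)"
      by (rule finsum_cong') (use False in auto)
    thus ?thesis using sum False by (auto simp: delta_def CP_zero)
  qed
qed

lemma delta_add: "g \<in> G \<Longrightarrow> a \<in> D g \<Longrightarrow> b \<in> D g \<Longrightarrow> delta S g (a \<oplus> b) = delta S g a \<oplus>\<^bsub>CP\<^esub> delta S g b"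
  unfolding CP_add delta_def by auto

lemma delta_zero: "delta S g \<zero> = zero CP"
  unfolding CP_zero delta_def by auto

lemma delta_neg: assumes g: "g \<in> G" and a: "a \<in> D g" shows "delta S g (\<ominus> a) = \<ominus>\<^bsub>CP\<^esub> delta S g a"
proof -
  have "\<ominus>\<^bsub>CP\<^esub> delta S g a = (\<lambda>k. \<ominus> delta S g a k)" by (rule CP_neg[OF delta_in[OF g a]])
  moreover have "(\<lambda>k. if k = g then \<ominus> a else \<zero>) = (\<lambda>k. \<ominus> (if k = g then a else \<zero>))"
    by (rule ext) simp
  ultimately show ?thesis by (simp add: delta_def)
qed

lemma CP_induct:
  assumes Q0: "Q (zero CP)"
    and Qadd: "\<And>f f'. f \<in> carrier CP \<Longrightarrow> f' \<in> carrier CP \<Longrightarrow> Q f \<Longrightarrow> Q f' \<Longrightarrow> Q (f \<oplus>\<^bsub>CP\<^esub> f')"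
    and Qd: "\<And>g a. g \<in> G \<Longrightarrow> a \<in> D g \<Longrightarrow> Q (delta S g a)"
    and f: "f \<in> carrier CP"
  shows "Q f"
proof -
  have fD: "\<And>k. k \<in> G \<Longrightarrow> f k \<in> D k" and f0: "\<And>k. k \<notin> G \<Longrightarrow> f k = \<zero>"
    using f unfolding CP_carrier fam_def by auto
  have main: "finite X \<Longrightarrow> X \<subseteq> G \<Longrightarrow> Q (\<lambda>k. if k \<in> X then f k else \<zero>) \<and> (\<lambda>k. if k \<in> X then f k else \<zero>) \<in> carrier CP" for X
  proof (induction X rule: finite_induct)
    case empty
    have "(\<lambda>k. if k \<in> {} then f k else \<zero>) = zero CP" by (simp add: CP_zero)
    thus ?case using Q0 zero_CP by simp
  next
    case (insert g X)
    have g: "g \<in> G" and XG: "X \<subseteq> G" using insert by auto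
    have IH: "Q (\<lambda>k. if k \<in> X then f k else \<zero>)" "(\<lambda>k. if k \<in> X then f k else \<zero>) \<in> carrier CP"
      using insert XG by auto
    have dg: "delta S g (f g) \<in> carrier CP" using delta_in g fD by blast
    have eq: "(\<lambda>k. if k \<in> insert g X then f k else \<zero>) = (\<lambda>k. if k \<in> X then f k else \<zero>) \<oplus>\<^bsub>CP\<^esub> delta S g (f g)"
      unfolding CP_add delta_def
    proof
      fix k show "(if k \<in> insert g X then f k else \<zero>) = (if k \<in> X then f k else \<zero>) \<oplus> (if k = g then f g else \<zero>)"
        using insert(2) fD[of k] D_carrier[of k] f0[of k] by (cases "k \<in> G") auto
    qed
    have "Q ((\<lambda>k. if k \<in> X then f k else \<zero>) \<oplus>\<^bsub>CP\<^esub> delta S g (f g))"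
      using Qadd[OF IH(2) dg IH(1) Qd[OF g fD[OF g]]] .
    moreover have "(\<lambda>k. if k \<in> X then f k else \<zero>) \<oplus>\<^bsub>CP\<^esub> delta S g (f g) \<in> carrier CP"
      using abelian_groupE(1)[OF CP_abelian IH(2) dg] .
    ultimately show ?case using eq by simp
  qed
  have "(\<lambda>k. if k \<in> G then f k else \<zero>) = f" using f0 by auto
  thus ?thesis using main[OF finG] by simp
qed

end

locale gcpl = gtpa + cpl
begin

lemma Dsub: "g \<in> G \<Longrightarrow> x \<in> D g \<Longrightarrow> x \<in> carrier S" using D_carrier by blast

lemma ct_simp:
  assumes g: "g \<in> G" and h: "h \<in> G" and c: "cp g h" and a: "a \<in> D g" and b: "b \<in> D h"
  shows "ct g h a b = fst (w g h) (a \<otimes> \<alpha> g b)"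
proof -
  have a': "inv_into (D (i g)) (\<alpha> g) a \<in> D (i g)" using ainv_in g a by simp
  have b': "b \<in> D (i g)" using b Dg[OF h] D_inv_eq[OF g] c by (simp add: cp_def')
  show ?thesis unfolding ct_def using alpha_mul[OF g a' b'] alpha_ainv[OF g a] by simp
qed

lemma ct_assoc:
  assumes g: "g \<in> G" and h: "h \<in> G" and t: "t \<in> G" and gh: "cp g h" and ht: "cp h t"
    and a: "a \<in> D g" and b: "b \<in> D h" and c: "c \<in> D t"
  shows "ct (m g h) t (ct g h a b) c = ct g (m h t) a (ct h t b c)"
proof -
  let ?r = "rr g"
  have mgh: "m g h \<in> G" and mht: "m h t \<in> G" using g h t gh ht by auto
  have cght: "cp (m g h) t" and cgth: "cp g (m h t)" using ax4[OF g h t gh ht] by auto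
  have assoc': "m (m g h) t = m g (m h t)" using assoc[OF g h t gh ht] .
  have rh: "rr h = dd g" using gh by (simp add: cp_def')
  have rt: "rr t = dd h" using ht by (simp add: cp_def')
  have Dg': "D g = D ?r" using Dg[OF g] .
  have Dh': "D h = D (dd g)" using Dg[OF h] rh by simp
  have Dt': "D t = D (dd h)" using Dg[OF t] rt by simp
  have Dig: "D (i g) = D (dd g)" using D_inv_eq[OF g] .
  have Dgh: "D (m g h) = D ?r" using Dg[OF mgh] g h gh by simp
  have Dht: "D (m h t) = D (dd g)" using Dg[OF mht] h t ht rh by simp
  have Dght: "D (m g (m h t)) = D ?r" using Dg[of "m g (m h t)"] g mht cgth by simp
  have Drh: "D (rr h) = D (dd g)" using rh by simp
  let ?a' = "inv_into (D (i g)) (\<alpha> g) a"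
  have a': "?a' \<in> D (dd g)" using ainv_in[OF g a] Dig by simp
  have aa': "\<alpha> g ?a' = a" using alpha_ainv[OF g a] .
  have bdg: "b \<in> D (dd g)" using b Dh' by simp
  have ahc: "\<alpha> h c \<in> D (dd g)" using alpha_in[OF h, of c] c Dt' D_inv_eq[OF h] Dh' by simp
  let ?z = "b \<otimes> \<alpha> h c"
  have z: "?z \<in> D (dd g)" using D_mult[of "dd g" b "\<alpha> h c"] bdg ahc g by simp
  have ab: "\<alpha> g b \<in> D ?r" using alpha_in[OF g, of b] bdg Dig Dg' by simp
  let ?p = "a \<otimes> \<alpha> g b"
  have p: "?p \<in> D ?r" using D_mult[of ?r a "\<alpha> g b"] a ab Dg' g by simp
  have wgh: "is_multiplier S (D ?r) (w g h)" using wm[OF g h gh] .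
  have wht: "is_multiplier S (D (dd g)) (w h t)" using wm[OF h t ht] rh by simp
  obtain w' where w': "mult_inverse S (D ?r) (w g h) w'" using winv[OF g h gh] by blast
  have w'm: "is_multiplier S (D ?r) w'" using w' unfolding mult_inverse_def by blast
  have ct1: "ct g h a b = fst (w g h) ?p" using ct_simp[OF g h gh a b] .
  have ct1in: "ct g h a b \<in> D (m g h)" using ct_in[OF g h gh a b] .
  have LHS: "ct (m g h) t (ct g h a b) c = fst (w (m g h) t) (fst (w g h) ?p \<otimes> \<alpha> (m g h) c)"
    using ct_simp[OF mgh t cght ct1in c] ct1 by simp
  have ct2: "ct h t b c = fst (w h t) ?z" using ct_simp[OF h t ht b c] .
  have fz: "fst (w h t) ?z \<in> D (dd g)" using wht z unfolding is_multiplier_def by blast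
  have ct2in: "ct h t b c \<in> D (m h t)" using ct_in[OF h t ht b c] .
  have RHS1: "ct g (m h t) a (ct h t b c) = fst (w g (m h t)) (a \<otimes> \<alpha> g (fst (w h t) ?z))"
    using ct_simp[OF g mht cgth a ct2in] ct2 by simp
  have s1: "a \<otimes> \<alpha> g (fst (w h t) ?z) = \<alpha> g (?a' \<otimes> fst (w h t) ?z)"
    using alpha_mul[OF g, of ?a' "fst (w h t) ?z"] a' fz Dig aa' by simp
  have s2: "?a' \<otimes> fst (w h t) ?z = fst (w h t) (?a' \<otimes> ?z)"
    using wht a' z unfolding is_multiplier_def by simp
  have memc: "?a' \<otimes> ?z \<in> set_prod S (set_prod S (D (i g)) (D h)) (D (m h t))"
  proof -
    have "set_prod S (set_prod S (D (i g)) (D h)) (D (m h t)) = D (dd g)"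
      using Dig Dh' Dht sp_r[OF h] rh by simp
    moreover have "?a' \<otimes> ?z \<in> D (dd g)" using D_mult[of "dd g" ?a' ?z] a' z g by simp
    ultimately show ?thesis by simp
  qed
  have s3: "fst (w g (m h t)) (\<alpha> g (fst (w h t) (?a' \<otimes> ?z))) = fst (w (m g h) t) (fst (w g h) (\<alpha> g (?a' \<otimes> ?z)))"
    using cocycle[OF g h t gh ht memc] .
  have s4: "\<alpha> g (?a' \<otimes> ?z) = ?p \<otimes> \<alpha> g (\<alpha> h c)"
  proof -
    have "\<alpha> g (?a' \<otimes> ?z) = a \<otimes> \<alpha> g ?z" using alpha_mul[OF g, of ?a' ?z] a' z Dig aa' by simp
    also have "\<alpha> g ?z = \<alpha> g b \<otimes> \<alpha> g (\<alpha> h c)" using alpha_mul[OF g, of b "\<alpha> h c"] bdg ahc Dig by simp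
    finally show ?thesis using m_assoc Dsub a ab alpha_in[OF g, of "\<alpha> h c"] ahc Dig g Dg' by (metis)
  qed
  have memc2: "c \<in> set_prod S (D (i h)) (D (m (i h) (i g)))"
  proof -
    have cc: "cp (i h) (i g)" using g h gh by (simp add: cp_def')
    have "D (m (i h) (i g)) = D (dd h)" using Dg[of "m (i h) (i g)"] cc g h by simp
    hence "set_prod S (D (i h)) (D (m (i h) (i g))) = D (dd h)" using D_inv_eq[OF h] sp_r[of "i h"] h by simp
    thus ?thesis using c Dt' by simp
  qed
  have w'sp: "mult_inverse S (set_prod S (D g) (D (m g h))) (w g h) w'" using w' sp_gh[OF g h gh] by simp
  let ?Z = "\<alpha> (m g h) c"
  have Z: "?Z \<in> D ?r" using alpha_in[OF mgh, of c] c Dt' D_inv_eq[OF mgh] Dgh g h gh by simp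
  have s5: "\<alpha> g (\<alpha> h c) = fst w' (snd (w g h) ?Z)" using conj[OF g h gh memc2 w'sp] .
  have sZ: "snd (w g h) ?Z \<in> D ?r" using wgh Z unfolding is_multiplier_def by blast
  have Y: "fst w' (snd (w g h) ?Z) \<in> D ?r" using w'm sZ unfolding is_multiplier_def by blast
  have s6: "fst (w g h) (?p \<otimes> fst w' (snd (w g h) ?Z)) = fst (w g h) ?p \<otimes> ?Z"
  proof -
    have "fst (w g h) (?p \<otimes> fst w' (snd (w g h) ?Z)) = ?p \<otimes> fst (w g h) (fst w' (snd (w g h) ?Z))"
      using wgh p Y unfolding is_multiplier_def by blast
    also have "fst (w g h) (fst w' (snd (w g h) ?Z)) = snd (w g h) ?Z"
      using w' sZ unfolding mult_inverse_def by blast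
    also have "?p \<otimes> snd (w g h) ?Z = fst (w g h) ?p \<otimes> ?Z"
      using wgh p Z unfolding is_multiplier_def by metis
    finally show ?thesis .
  qed
  have "ct g (m h t) a (ct h t b c) = fst (w (m g h) t) (fst (w g h) (?p \<otimes> \<alpha> g (\<alpha> h c)))"
    using RHS1 s1 s2 s3 s4 by simp
  also have "\<dots> = fst (w (m g h) t) (fst (w g h) ?p \<otimes> ?Z)" using s5 s6 by simp
  finally show ?thesis using LHS by simp
qed


abbreviation mB (infixl "\<cdot>" 70) where "x \<cdot> y \<equiv> x \<otimes>\<^bsub>CP\<^esub> y"
abbreviation aB (infixl "+++" 65) where "x +++ y \<equiv> x \<oplus>\<^bsub>CP\<^esub> y"

lemma addB_closed: "x \<in> carrier CP \<Longrightarrow> y \<in> carrier CP \<Longrightarrow> x +++ y \<in> carrier CP"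
  using abelian_groupE(1)[OF CP_abelian] .

lemma CP_induct'[consumes 1, case_names zero add delta]:
  assumes f: "f \<in> carrier CP" and Q0: "Q (zero CP)"
    and Qadd: "\<And>f f'. f \<in> carrier CP \<Longrightarrow> f' \<in> carrier CP \<Longrightarrow> Q f \<Longrightarrow> Q f' \<Longrightarrow> Q (f \<oplus>\<^bsub>CP\<^esub> f')"
    and Qd: "\<And>g a. g \<in> G \<Longrightarrow> a \<in> D g \<Longrightarrow> Q (delta S g a)"
  shows "Q f"
  by (rule CP_induct[of Q, OF Q0 Qadd Qd f])

lemma assoc_ddd:
  assumes g: "g \<in> G" and h: "h \<in> G" and t: "t \<in> G" and a: "a \<in> D g" and b: "b \<in> D h" and c: "c \<in> D t"
  shows "(delta S g a \<cdot> delta S h b) \<cdot> delta S t c = delta S g a \<cdot> (delta S h b \<cdot> delta S t c)"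
proof (cases "cp g h")
  case gh: True
  show ?thesis
  proof (cases "cp h t")
    case ht: True
    have mgh: "m g h \<in> G" and mht: "m h t \<in> G" using g h t gh ht by auto
    have cght: "cp (m g h) t" and cgth: "cp g (m h t)" using ax4[OF g h t gh ht] by auto
    have x1: "ct g h a b \<in> D (m g h)" and x2: "ct h t b c \<in> D (m h t)" using ct_in g h t gh ht a b c by auto
    have "(delta S g a \<cdot> delta S h b) \<cdot> delta S t c = delta S (m (m g h) t) (ct (m g h) t (ct g h a b) c)"
      using delta_single[OF g h a b] delta_single[OF mgh t x1 c] gh cght by simp
    also have "\<dots> = delta S (m g (m h t)) (ct g (m h t) a (ct h t b c))"
      using assoc[OF g h t gh ht] ct_assoc[OF g h t gh ht a b c] by simp
    also have "\<dots> = delta S g a \<cdot> (delta S h b \<cdot> delta S t c)"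
      using delta_single[OF h t b c] delta_single[OF g mht a x2] ht cgth by simp
    finally show ?thesis .
  next
    case ht: False
    have mgh: "m g h \<in> G" using g h gh by auto
    have x1: "ct g h a b \<in> D (m g h)" using ct_in g h gh a b by auto
    have nc: "\<not> cp (m g h) t" using ht g h gh by (simp add: cp_def')
    have "(delta S g a \<cdot> delta S h b) \<cdot> delta S t c = zero CP"
      using delta_single[OF g h a b] delta_single[OF mgh t x1 c] gh nc by simp
    moreover have "delta S g a \<cdot> (delta S h b \<cdot> delta S t c) = zero CP"
      using delta_single[OF h t b c] ht CP_mult_zero2[OF delta_in[OF g a]] by simp
    ultimately show ?thesis by simp
  qed
next
  case gh: False
  have L: "(delta S g a \<cdot> delta S h b) \<cdot> delta S t c = zero CP"
    using delta_single[OF g h a b] gh CP_mult_zero1[OF delta_in[OF t c]] by simp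
  show ?thesis
  proof (cases "cp h t")
    case ht: True
    have mht: "m h t \<in> G" using h t ht by auto
    have x2: "ct h t b c \<in> D (m h t)" using ct_in h t ht b c by auto
    have nc: "\<not> cp g (m h t)" using gh h t ht by (simp add: cp_def')
    have "delta S g a \<cdot> (delta S h b \<cdot> delta S t c) = zero CP"
      using delta_single[OF h t b c] delta_single[OF g mht a x2] ht nc by simp
    thus ?thesis using L by simp
  next
    case ht: False
    have "delta S g a \<cdot> (delta S h b \<cdot> delta S t c) = zero CP"
      using delta_single[OF h t b c] ht CP_mult_zero2[OF delta_in[OF g a]] by simp
    thus ?thesis using L by simp
  qed
qed

lemma assoc_dd:
  assumes g: "g \<in> G" and h: "h \<in> G" and a: "a \<in> D g" and b: "b \<in> D h" and f: "f \<in> carrier CP"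
  shows "(delta S g a \<cdot> delta S h b) \<cdot> f = delta S g a \<cdot> (delta S h b \<cdot> f)"
  using f
proof (induction f rule: CP_induct')
  case zero
  have "delta S g a \<cdot> delta S h b \<in> carrier CP" using CP_mult_closed delta_in g h a b by blast
  thus ?case using CP_mult_zero2 delta_in g h a b by simp
next
  case (add f f')
  have da: "delta S g a \<in> carrier CP" and db: "delta S h b \<in> carrier CP" using delta_in g h a b by auto
  have dab: "delta S g a \<cdot> delta S h b \<in> carrier CP" using CP_mult_closed da db by blast
  have "(delta S g a \<cdot> delta S h b) \<cdot> (f +++ f') = (delta S g a \<cdot> delta S h b) \<cdot> f +++ (delta S g a \<cdot> delta S h b) \<cdot> f'"
    using CP_rdistr[OF dab add(1,2)] .
  also have "\<dots> = delta S g a \<cdot> (delta S h b \<cdot> f) +++ delta S g a \<cdot> (delta S h b \<cdot> f')" using add by simp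
  also have "\<dots> = delta S g a \<cdot> (delta S h b \<cdot> f +++ delta S h b \<cdot> f')"
    using CP_rdistr[OF da CP_mult_closed[OF db add(1)] CP_mult_closed[OF db add(2)]] by simp
  also have "\<dots> = delta S g a \<cdot> (delta S h b \<cdot> (f +++ f'))" using CP_rdistr[OF db add(1,2)] by simp
  finally show ?case .
next
  case (delta t c) thus ?case using assoc_ddd[OF g h _ a b] by blast
qed

lemma assoc_d:
  assumes g: "g \<in> G" and a: "a \<in> D g" and f: "f \<in> carrier CP"
  shows "\<forall>f'\<in>carrier CP. (delta S g a \<cdot> f) \<cdot> f' = delta S g a \<cdot> (f \<cdot> f')"
  using f
proof (induction f rule: CP_induct')
  case zero
  show ?case using CP_mult_zero2 CP_mult_zero1 delta_in g a by simp
next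
  case (add f1 f2)
  have da: "delta S g a \<in> carrier CP" using delta_in g a by auto
  show ?case
  proof
    fix f' assume f': "f' \<in> carrier CP"
    have "(delta S g a \<cdot> (f1 +++ f2)) \<cdot> f' = (delta S g a \<cdot> f1) \<cdot> f' +++ (delta S g a \<cdot> f2) \<cdot> f'"
      using CP_rdistr[OF da add(1,2)] CP_ldistr[OF f' CP_mult_closed[OF da add(1)] CP_mult_closed[OF da add(2)]] by simp
    also have "\<dots> = delta S g a \<cdot> (f1 \<cdot> f') +++ delta S g a \<cdot> (f2 \<cdot> f')" using add f' by simp
    also have "\<dots> = delta S g a \<cdot> ((f1 +++ f2) \<cdot> f')"
      using CP_rdistr[OF da CP_mult_closed[OF add(1) f'] CP_mult_closed[OF add(2) f']] CP_ldistr[OF f' add(1,2)] by simp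
    finally show "(delta S g a \<cdot> (f1 +++ f2)) \<cdot> f' = delta S g a \<cdot> ((f1 +++ f2) \<cdot> f')" .
  qed
next
  case (delta h b) thus ?case using assoc_dd[OF g _ a] by blast
qed

lemma CP_assoc:
  assumes f: "f \<in> carrier CP" and f1: "f1 \<in> carrier CP" and f2: "f2 \<in> carrier CP"
  shows "(f \<cdot> f1) \<cdot> f2 = f \<cdot> (f1 \<cdot> f2)"
proof -
  have "\<forall>f1\<in>carrier CP. \<forall>f2\<in>carrier CP. (f \<cdot> f1) \<cdot> f2 = f \<cdot> (f1 \<cdot> f2)"
    using f
  proof (induction f rule: CP_induct')
    case zero thus ?case using CP_mult_zero1 CP_mult_closed by simp
  next
    case (add x y)
    show ?case
    proof (intro ballI)
      fix f1 f2 assume f1: "f1 \<in> carrier CP" and f2: "f2 \<in> carrier CP"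
      have "((x +++ y) \<cdot> f1) \<cdot> f2 = (x \<cdot> f1) \<cdot> f2 +++ (y \<cdot> f1) \<cdot> f2"
        using CP_ldistr[OF f1 add(1,2)] CP_ldistr[OF f2 CP_mult_closed[OF add(1) f1] CP_mult_closed[OF add(2) f1]] by simp
      also have "\<dots> = x \<cdot> (f1 \<cdot> f2) +++ y \<cdot> (f1 \<cdot> f2)" using add f1 f2 by simp
      also have "\<dots> = (x +++ y) \<cdot> (f1 \<cdot> f2)" using CP_ldistr[OF CP_mult_closed[OF f1 f2] add(1,2)] by simp
      finally show "((x +++ y) \<cdot> f1) \<cdot> f2 = (x +++ y) \<cdot> (f1 \<cdot> f2)" .
    qed
  next
    case (delta g a) thus ?case using assoc_d by blast
  qed
  thus ?thesis using f1 f2 by blast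
qed

end

locale mainL =
  fixes G :: "'g set" and m :: "'g \<Rightarrow> 'g \<Rightarrow> 'g" and i :: "'g \<Rightarrow> 'g"
    and R :: "'a ring" and D :: "'g \<Rightarrow> 'a set" and \<alpha> :: "'g \<Rightarrow> 'a \<Rightarrow> 'a"
    and w :: "'g \<Rightarrow> 'g \<Rightarrow> ('a \<Rightarrow> 'a) \<times> ('a \<Rightarrow> 'a)"
    and T :: "'b ring" and E :: "'g \<Rightarrow> 'b set" and \<beta> :: "'g \<Rightarrow> 'b \<Rightarrow> 'b"
    and u :: "'g \<Rightarrow> 'g \<Rightarrow> ('b \<Rightarrow> 'b) \<times> ('b \<Rightarrow> 'b)" and \<phi> :: "'g \<Rightarrow> 'a \<Rightarrow> 'b"
  assumes grp: "groupoid G m i" and finG: "finite G"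
    and ringR: "ring R"
    and tpaR: "twisted_partial_action G m i R D \<alpha> w"
    and rngT: "rng T"
    and glob: "is_globalization G m i R D \<alpha> w T E \<beta> u \<phi>"
begin

lemmas GL = glob[unfolded is_globalization_def]
lemmas GL1 = GL[THEN conjunct1]
lemmas GL2 = GL[THEN conjunct2, THEN conjunct1]
lemmas GL3 = GL[THEN conjunct2, THEN conjunct2, THEN conjunct1]
lemmas GL4 = GL[THEN conjunct2, THEN conjunct2, THEN conjunct2, THEN conjunct1]
lemmas GL5 = GL[THEN conjunct2, THEN conjunct2, THEN conjunct2, THEN conjunct2]

sublocale grpd G m i by (unfold_locales) (rule grp)
sublocale Rr: rngl R by unfold_locales (rule ring_rng[OF ringR])
sublocale Tr: rngl T by unfold_locales (rule rngT)
sublocale RT: rng2 R T by unfold_locales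
sublocale TT: rng2 T T by unfold_locales
sublocale A: cpl G m i R D \<alpha> w
  by unfold_locales (auto simp: tpaR finG)
sublocale B: gcpl G m i T E \<beta> u
  by unfold_locales (auto simp: GL1 GL2 finG)

definition "Pd k = \<phi> (rr k) ` D k"
definition "Qd k = \<beta> k ` (\<phi> (dd k) ` D (dd k))"

lemma phi_inj: "e \<in> identities G m i \<Longrightarrow> inj_on (\<phi> e) (D e)" using GL3 by blast
lemma phi_into: "e \<in> identities G m i \<Longrightarrow> \<phi> e ` D e \<subseteq> E e" using GL3 by blast
lemma phi_hom: "e \<in> identities G m i \<Longrightarrow> rng_hom_on R T (D e) (\<phi> e)" using GL3 by blast
lemma phi_ideal0: "e \<in> identities G m i \<Longrightarrow> rng_ideal (\<phi> e ` D e) (T\<lparr>carrier := E e\<rparr>)" using GL3 by blast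

lemma E_gen: "g \<in> G \<Longrightarrow> E g = ideal_sum T {\<beta> h ` (\<phi> (dd h) ` D (dd h)) | h. h \<in> G \<and> rr h = rr g}"
  using GL4 by blast
lemma Pd_eq: "g \<in> G \<Longrightarrow> \<phi> (rr g) ` D g = \<phi> (rr g) ` D (rr g) \<inter> \<beta> g ` (\<phi> (dd g) ` D (dd g))"
  using GL4 by blast
lemma beta_phi: "g \<in> G \<Longrightarrow> a \<in> D (i g) \<Longrightarrow> \<beta> g (\<phi> (dd g) a) = \<phi> (rr g) (\<alpha> g a)"
  using GL4 by blast
lemma phi_w: "g \<in> G \<Longrightarrow> h \<in> G \<Longrightarrow> cp g h \<Longrightarrow> a \<in> set_prod R (D g) (D (m g h)) \<Longrightarrow>
   \<phi> (rr g) (fst (w g h) a) = fst (u g h) (\<phi> (rr g) a)"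
  using GL5 by blast

lemma E_addsub: "g \<in> G \<Longrightarrow> addsub T (E g)" using B.D_addsub by blast

lemma phi_add: "g \<in> G \<Longrightarrow> x \<in> D (rr g) \<Longrightarrow> y \<in> D (rr g) \<Longrightarrow> \<phi> (rr g) (x \<oplus>\<^bsub>R\<^esub> y) = \<phi> (rr g) x \<oplus>\<^bsub>T\<^esub> \<phi> (rr g) y"
  using phi_hom[of "rr g"] unfolding rng_hom_on_def by auto
lemma phi_mul: "g \<in> G \<Longrightarrow> x \<in> D (rr g) \<Longrightarrow> y \<in> D (rr g) \<Longrightarrow> \<phi> (rr g) (x \<otimes>\<^bsub>R\<^esub> y) = \<phi> (rr g) x \<otimes>\<^bsub>T\<^esub> \<phi> (rr g) y"
  using phi_hom[of "rr g"] unfolding rng_hom_on_def by auto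
lemma phi_in: "g \<in> G \<Longrightarrow> x \<in> D (rr g) \<Longrightarrow> \<phi> (rr g) x \<in> E (rr g)"
  using phi_into[of "rr g"] by auto
lemma phi_inj': "g \<in> G \<Longrightarrow> inj_on (\<phi> (rr g)) (D (rr g))" using phi_inj[of "rr g"] by simp

lemma E_carrier: "g \<in> G \<Longrightarrow> E g \<subseteq> carrier T" using B.D_carrier by blast

lemma phi_img_carrier: "g \<in> G \<Longrightarrow> \<phi> (rr g) ` D (rr g) \<subseteq> carrier T"
  using phi_in E_carrier[of "rr g"] by auto

lemma Pdr_ideal: "g \<in> G \<Longrightarrow> ideal_in T (Pd (rr g)) (E g)"
proof -
  assume g: "g \<in> G"
  have "ideal_in T (\<phi> (rr g) ` D (rr g)) (E (rr g))"
    using Tr.ideal_in_restr[OF phi_ideal0[of "rr g"] E_addsub[of "rr g"]] g by simp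
  thus ?thesis using B.Dg[OF g] g by (simp add: Pd_def)
qed

lemma Pd_idem: "g \<in> G \<Longrightarrow> set_prod T (Pd g) (Pd g) = Pd g"
  unfolding Pd_def
  apply (rule RT.hom_idem[OF A.Dr_addsub phi_hom _ A.D_sub_r A.idem])
  using phi_img_carrier by auto

lemma Pdr_idem: "g \<in> G \<Longrightarrow> set_prod T (Pd (rr g)) (Pd (rr g)) = Pd (rr g)"
  using Pd_idem[of "rr g"] by simp

lemma Pdd_ideal: "g \<in> G \<Longrightarrow> ideal_in T (\<phi> (dd g) ` D (dd g)) (E (i g))"
proof -
  assume g: "g \<in> G"
  have "ideal_in T (Pd (rr (dd g))) (E (dd g))" using Pdr_ideal[of "dd g"] g by simp
  thus ?thesis using g B.D_inv_eq[OF g] by (simp add: Pd_def)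
qed

lemma Qd_ideal: "g \<in> G \<Longrightarrow> ideal_in T (Qd g) (E g)"
  unfolding Qd_def
  apply (rule TT.iso_ideal[of "E (i g)" "E g" "\<beta> g"])
  using B.D_addsub B.alpha_bij B.alpha_hom Pdd_ideal by auto

lemma Qd_idem: "g \<in> G \<Longrightarrow> set_prod T (Qd g) (Qd g) = Qd g"
proof -
  assume g: "g \<in> G"
  have sub: "\<phi> (dd g) ` D (dd g) \<subseteq> E (i g)" using Pdd_ideal[OF g] unfolding ideal_in_def by blast
  have idm: "set_prod T (\<phi> (dd g) ` D (dd g)) (\<phi> (dd g) ` D (dd g)) = \<phi> (dd g) ` D (dd g)"
    using Pd_idem[of "dd g"] g by (simp add: Pd_def)
  show ?thesis unfolding Qd_def
    apply (rule TT.hom_idem[OF B.D_addsub B.alpha_hom _ sub idm])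
    using g B.alpha_in E_carrier by auto
qed

lemma Pd_int: "g \<in> G \<Longrightarrow> Pd g = Pd (rr g) \<inter> Qd g"
  unfolding Pd_def Qd_def using Pd_eq[of g] r_r[of g] by simp

lemma Pd_ideal: "g \<in> G \<Longrightarrow> ideal_in T (Pd g) (E g)"
proof -
  assume g: "g \<in> G"
  have "ideal_in T (Pd (rr g) \<inter> Qd g) (E g)" by (rule Tr.ideal_inter[OF Pdr_ideal[OF g] Qd_ideal[OF g]])
  thus ?thesis using Pd_int[OF g] by simp
qed

end

context mainL begin

lemma Eg: "g \<in> G \<Longrightarrow> E g = E (rr g)" using B.Dg by blast

lemma Qd_ideal_r: "g \<in> G \<Longrightarrow> ideal_in T (Qd g) (E (rr g))" using Qd_ideal[of g] Eg[of g] by simp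
lemma Pd_ideal_r: "g \<in> G \<Longrightarrow> ideal_in T (Pd g) (E (rr g))" using Pd_ideal[of g] Eg[of g] by simp
lemma Pdr_ideal_r: "g \<in> G \<Longrightarrow> ideal_in T (Pd (rr g)) (E (rr g))" using Pdr_ideal[of g] Eg[of g] by simp

lemma ideal_sub: "ideal_in T I X \<Longrightarrow> I \<subseteq> X" unfolding ideal_in_def by blast
lemma ideal_mul: "ideal_in T I X \<Longrightarrow> x \<in> X \<Longrightarrow> a \<in> I \<Longrightarrow> x \<otimes>\<^bsub>T\<^esub> a \<in> I \<and> a \<otimes>\<^bsub>T\<^esub> x \<in> I"
  unfolding ideal_in_def by blast

lemma uclose:
  assumes g: "g \<in> G" and h: "h \<in> G" and c: "cp g h" and I: "ideal_in T I (E (rr g))"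
    and idm: "set_prod T I I = I" and x: "x \<in> I"
  shows "fst (u g h) x \<in> I" "snd (u g h) x \<in> I"
  using Tr.mult_closed_ideal[OF E_addsub[of "rr g"] B.wm[OF g h c] I idm x] g by auto

lemma u'close:
  assumes g: "g \<in> G" and w': "mult_inverse T (E (rr g)) (u g h) w'" and I: "ideal_in T I (E (rr g))"
    and idm: "set_prod T I I = I" and x: "x \<in> I"
  shows "fst w' x \<in> I" "snd w' x \<in> I"
proof -
  have "is_multiplier T (E (rr g)) w'" using w' unfolding mult_inverse_def by blast
  thus "fst w' x \<in> I" "snd w' x \<in> I" using Tr.mult_closed_ideal[OF E_addsub[of "rr g"] _ I idm x] g by auto
qed

lemma K3:
  assumes g: "g \<in> G" and h: "h \<in> G" and c: "cp g h" and x: "x \<in> Qd h"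
  shows "\<beta> g x \<in> Qd (m g h)"
proof -
  obtain s where s: "s \<in> \<phi> (dd h) ` D (dd h)" and xs: "x = \<beta> h s" using x unfolding Qd_def by blast
  have sE: "s \<in> E (dd h)" using s Pdd_ideal[OF h] B.D_inv_eq[OF h] unfolding ideal_in_def by auto
  have mgh: "m g h \<in> G" using g h c by simp
  have memc2: "s \<in> set_prod T (E (i h)) (E (m (i h) (i g)))"
  proof -
    have cc: "cp (i h) (i g)" using g h c by (simp add: cp_def')
    have "E (m (i h) (i g)) = E (dd h)" using B.Dg[of "m (i h) (i g)"] cc g h by simp
    hence "set_prod T (E (i h)) (E (m (i h) (i g))) = E (dd h)" using B.D_inv_eq[OF h] B.sp_r[of "i h"] h by simp
    thus ?thesis using sE by simp
  qed
  obtain w' where w': "mult_inverse T (E (rr g)) (u g h) w'" using B.winv[OF g h c] by blast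
  have w'sp: "mult_inverse T (set_prod T (E g) (E (m g h))) (u g h) w'" using w' B.sp_gh[OF g h c] by simp
  have e1: "\<beta> g (\<beta> h s) = fst w' (snd (u g h) (\<beta> (m g h) s))" using B.conj[OF g h c memc2 w'sp] .
  have q: "\<beta> (m g h) s \<in> Qd (m g h)" unfolding Qd_def using s g h c by simp
  have I: "ideal_in T (Qd (m g h)) (E (rr g))" using Qd_ideal_r[OF mgh] g h c by simp
  have idm: "set_prod T (Qd (m g h)) (Qd (m g h)) = Qd (m g h)" using Qd_idem[OF mgh] .
  have "snd (u g h) (\<beta> (m g h) s) \<in> Qd (m g h)" using uclose[OF g h c I idm q] by simp
  hence "fst w' (snd (u g h) (\<beta> (m g h) s)) \<in> Qd (m g h)" using u'close[OF g w' I idm] by simp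
  thus ?thesis using e1 xs by simp
qed

lemma binv_in: "g \<in> G \<Longrightarrow> a \<in> E g \<Longrightarrow> inv_into (E (i g)) (\<beta> g) a \<in> E (rr h) \<Longrightarrow> True" by simp

lemma C1:
  assumes g: "g \<in> G" and h: "h \<in> G" and c: "cp g h" and a: "a \<in> Pd (rr g)" and b: "b \<in> E h"
  shows "B.ct g h a b \<in> Pd (rr (m g h))"
proof -
  have aE: "a \<in> E g" using a Pdr_ideal[OF g] unfolding ideal_in_def by blast
  have e: "B.ct g h a b = fst (u g h) (a \<otimes>\<^bsub>T\<^esub> \<beta> g b)" using B.ct_simp[OF g h c aE b] .
  have bi: "b \<in> E (i g)" using b B.Dg[OF h] B.D_inv_eq[OF g] c by (simp add: cp_def')
  have bb: "\<beta> g b \<in> E (rr g)" using B.alpha_in[OF g bi] Eg[OF g] by simp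
  have p: "a \<otimes>\<^bsub>T\<^esub> \<beta> g b \<in> Pd (rr g)" using ideal_mul[OF Pdr_ideal_r[OF g] bb a] by blast
  have "fst (u g h) (a \<otimes>\<^bsub>T\<^esub> \<beta> g b) \<in> Pd (rr g)" using uclose[OF g h c Pdr_ideal_r[OF g] Pdr_idem[OF g] p] by simp
  thus ?thesis using e g h c by simp
qed

lemma ct_beta:
  assumes g: "g \<in> G" and h: "h \<in> G" and c: "cp g h" and a: "a \<in> E g" and b: "b \<in> Qd h"
  shows "\<beta> g (inv_into (E (i g)) (\<beta> g) a \<otimes>\<^bsub>T\<^esub> b) \<in> Qd (m g h)"
proof -
  have a': "inv_into (E (i g)) (\<beta> g) a \<in> E (rr h)" using B.ainv_in[OF g a] B.D_inv_eq[OF g] c by (simp add: cp_def')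
  have "inv_into (E (i g)) (\<beta> g) a \<otimes>\<^bsub>T\<^esub> b \<in> Qd h" using ideal_mul[OF Qd_ideal_r[OF h] a' b] by blast
  thus ?thesis using K3[OF g h c] by blast
qed

lemma C4:
  assumes g: "g \<in> G" and h: "h \<in> G" and c: "cp g h" and a: "a \<in> E g" and b: "b \<in> Qd h"
  shows "B.ct g h a b \<in> Qd (m g h)"
proof -
  have mgh: "m g h \<in> G" using g h c by simp
  have I: "ideal_in T (Qd (m g h)) (E (rr g))" using Qd_ideal_r[OF mgh] g h c by simp
  show ?thesis unfolding B.ct_def using uclose[OF g h c I Qd_idem[OF mgh] ct_beta[OF assms]] by simp
qed

lemma C3:
  assumes g: "g \<in> G" and h: "h \<in> G" and c: "cp g h" and a: "a \<in> Pd (rr g)" and b: "b \<in> Qd h"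
  shows "B.ct g h a b \<in> Pd (m g h)"
proof -
  have mgh: "m g h \<in> G" using g h c by simp
  have aE: "a \<in> E g" using a Pdr_ideal[OF g] unfolding ideal_in_def by blast
  have bE: "b \<in> E h" using b Qd_ideal[OF h] unfolding ideal_in_def by blast
  let ?x = "\<beta> g (inv_into (E (i g)) (\<beta> g) a \<otimes>\<^bsub>T\<^esub> b)"
  have x1: "?x \<in> Qd (m g h)" using ct_beta[OF g h c aE b] .
  have eqx: "?x = a \<otimes>\<^bsub>T\<^esub> \<beta> g b"
  proof -
    have a': "inv_into (E (i g)) (\<beta> g) a \<in> E (i g)" using B.ainv_in[OF g aE] .
    have bi: "b \<in> E (i g)" using bE B.Dg[OF h] B.D_inv_eq[OF g] c by (simp add: cp_def')
    show ?thesis using B.alpha_mul[OF g a' bi] B.alpha_ainv[OF g aE] by simp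
  qed
  have bi: "b \<in> E (i g)" using bE B.Dg[OF h] B.D_inv_eq[OF g] c by (simp add: cp_def')
  have bb: "\<beta> g b \<in> E (rr g)" using B.alpha_in[OF g bi] Eg[OF g] by simp
  have x2: "?x \<in> Pd (rr (m g h))" using ideal_mul[OF Pdr_ideal_r[OF g] bb a] eqx g h c by simp
  have x: "?x \<in> Pd (m g h)" using Pd_int[OF mgh] x1 x2 by simp
  have I: "ideal_in T (Pd (m g h)) (E (rr g))" using Pd_ideal_r[OF mgh] g h c by simp
  show ?thesis unfolding B.ct_def using uclose[OF g h c I Pd_idem[OF mgh] x] by simp
qed

lemma Pd_sub_Qd: "g \<in> G \<Longrightarrow> Pd g \<subseteq> Qd g" using Pd_int by blast
lemma Pd_sub_Pdr: "g \<in> G \<Longrightarrow> Pd g \<subseteq> Pd (rr g)" using Pd_int by blast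

lemma C5:
  assumes g: "g \<in> G" and h: "h \<in> G" and c: "cp g h" and a: "a \<in> Qd g" and b: "b \<in> Pd h"
  shows "B.ct g h a b \<in> Qd (m g h)"
proof -
  have aE: "a \<in> E g" using a Qd_ideal[OF g] unfolding ideal_in_def by blast
  have "b \<in> Qd h" using Pd_sub_Qd[OF h] b by blast
  thus ?thesis using C4[OF g h c aE] by blast
qed

end

context mainL begin

definition "Phi f = (\<lambda>g. if g \<in> G then \<phi> (rr g) (f g) else \<zero>\<^bsub>T\<^esub>)"
definition "Psi p = (\<lambda>g. if g \<in> G then inv_into (D g) (\<phi> (rr g)) (p g) else \<zero>\<^bsub>R\<^esub>)"
definition "Mc = fam T G (\<lambda>g. Pd (rr g))"
definition "Nc = fam T G Qd"
definition "Pc = fam T G Pd"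

lemma phi_inj_g: "g \<in> G \<Longrightarrow> inj_on (\<phi> (rr g)) (D g)"
  using phi_inj'[of g] A.D_sub_r[of g] inj_on_subset by blast

lemma Phi_in: "f \<in> carrier A.CP \<Longrightarrow> Phi f \<in> Pc"
  unfolding Phi_def Pc_def fam_def A.CP_carrier Pd_def by auto

lemma Psi_in: "p \<in> Pc \<Longrightarrow> Psi p \<in> carrier A.CP"
  unfolding Psi_def Pc_def fam_def A.CP_carrier Pd_def by (auto intro: inv_into_into)

lemma Psi_Phi: "f \<in> carrier A.CP \<Longrightarrow> Psi (Phi f) = f"
  unfolding Phi_def Psi_def A.CP_carrier fam_def
  using phi_inj_g by (auto intro!: ext simp: inv_into_f_f)

lemma Phi_Psi: "p \<in> Pc \<Longrightarrow> Phi (Psi p) = p"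
  unfolding Phi_def Psi_def Pc_def fam_def Pd_def
  by (auto intro!: ext simp: f_inv_into_f)

lemma fam_mono: "(\<And>g. g \<in> G \<Longrightarrow> C1 g \<subseteq> C2 g) \<Longrightarrow> fam T G C1 \<subseteq> fam T G C2"
  unfolding fam_def by blast

lemma Pc_Mc: "Pc \<subseteq> Mc" unfolding Pc_def Mc_def by (rule fam_mono) (rule Pd_sub_Pdr)
lemma Pc_Nc: "Pc \<subseteq> Nc" unfolding Pc_def Nc_def by (rule fam_mono) (rule Pd_sub_Qd)
lemma Mc_B: "Mc \<subseteq> carrier B.CP" unfolding Mc_def B.CP_carrier
  by (rule fam_mono) (use Pdr_ideal in \<open>auto simp: ideal_in_def\<close>)
lemma Nc_B: "Nc \<subseteq> carrier B.CP" unfolding Nc_def B.CP_carrier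
  by (rule fam_mono) (use Qd_ideal in \<open>auto simp: ideal_in_def\<close>)
lemma Pc_B: "Pc \<subseteq> carrier B.CP" using Pc_Mc Mc_B by blast

lemma addsub_Pdr: "\<forall>g\<in>G. addsub T (Pd (rr g))" using Pdr_ideal unfolding ideal_in_def by blast
lemma addsub_Qd: "\<forall>g\<in>G. addsub T (Qd g)" using Qd_ideal unfolding ideal_in_def by blast
lemma addsub_Pd: "\<forall>g\<in>G. addsub T (Pd g)" using Pd_ideal unfolding ideal_in_def by blast

lemma sub_E_Pdr: "\<forall>g\<in>G. Pd (rr g) \<subseteq> E g" using Pdr_ideal unfolding ideal_in_def by blast
lemma sub_E_Qd: "\<forall>g\<in>G. Qd g \<subseteq> E g" using Qd_ideal unfolding ideal_in_def by blast
lemma sub_E_Pd: "\<forall>g\<in>G. Pd g \<subseteq> E g" using Pd_ideal unfolding ideal_in_def by blast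
lemma sub_E_E: "\<forall>g\<in>G. E g \<subseteq> E g" by blast

lemma MB: "x \<in> Mc \<Longrightarrow> b \<in> carrier B.CP \<Longrightarrow> x \<otimes>\<^bsub>B.CP\<^esub> b \<in> Mc"
  unfolding Mc_def
  apply (rule B.fam_mult[OF sub_E_Pdr sub_E_E addsub_Pdr])
  using C1 B.CP_carrier by auto

lemma MN: "x \<in> Mc \<Longrightarrow> y \<in> Nc \<Longrightarrow> x \<otimes>\<^bsub>B.CP\<^esub> y \<in> Pc"
  unfolding Mc_def Nc_def Pc_def
  apply (rule B.fam_mult[OF sub_E_Pdr sub_E_Qd addsub_Pd])
  using C3 by auto

lemma BN: "b \<in> carrier B.CP \<Longrightarrow> y \<in> Nc \<Longrightarrow> b \<otimes>\<^bsub>B.CP\<^esub> y \<in> Nc"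
  unfolding Nc_def
  apply (rule B.fam_mult[OF sub_E_E sub_E_Qd addsub_Qd])
  using C4 B.CP_carrier by auto

lemma NP: "y \<in> Nc \<Longrightarrow> p \<in> Pc \<Longrightarrow> y \<otimes>\<^bsub>B.CP\<^esub> p \<in> Nc"
  unfolding Nc_def Pc_def
  apply (rule B.fam_mult[OF sub_E_Qd sub_E_Pd addsub_Qd])
  using C5 by auto

lemma phi_ct:
  assumes g: "g \<in> G" and h: "h \<in> G" and c: "cp g h" and a: "a \<in> D g" and b: "b \<in> D h"
  shows "\<phi> (rr g) (A.ct g h a b) = B.ct g h (\<phi> (rr g) a) (\<phi> (rr h) b)"
proof -
  let ?c = "inv_into (D (i g)) (\<alpha> g) a"
  have c1: "?c \<in> D (i g)" using A.ainv_in[OF g a] .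
  have y: "\<alpha> g (?c \<otimes>\<^bsub>R\<^esub> b) \<in> set_prod R (D g) (D (m g h))" using A.alpha_prod_in[OF g h c a b] .
  have cb: "?c \<otimes>\<^bsub>R\<^esub> b \<in> D (i g)" using A.ainv_prod_in(1)[OF g h c a b] .
  have s1: "\<phi> (rr g) (A.ct g h a b) = fst (u g h) (\<phi> (rr g) (\<alpha> g (?c \<otimes>\<^bsub>R\<^esub> b)))"
    unfolding A.ct_def using phi_w[OF g h c y] .
  have s2: "\<phi> (rr g) (\<alpha> g (?c \<otimes>\<^bsub>R\<^esub> b)) = \<beta> g (\<phi> (dd g) (?c \<otimes>\<^bsub>R\<^esub> b))"
    using beta_phi[OF g cb] by simp
  have cd: "?c \<in> D (dd g)" using c1 A.D_inv[OF g] by blast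
  have bd: "b \<in> D (dd g)" using b A.D_sub_r[OF h] c by (auto simp: cp_def')
  have s3: "\<phi> (dd g) (?c \<otimes>\<^bsub>R\<^esub> b) = \<phi> (dd g) ?c \<otimes>\<^bsub>T\<^esub> \<phi> (dd g) b"
    using phi_hom[of "dd g"] cd bd g unfolding rng_hom_on_def by simp
  have s4: "\<phi> (dd g) b = \<phi> (rr h) b" using c by (simp add: cp_def')
  have pc: "\<phi> (dd g) ?c \<in> E (i g)" using phi_into[of "dd g"] cd g B.D_inv_eq[OF g] by auto
  have s5: "\<beta> g (\<phi> (dd g) ?c) = \<phi> (rr g) a" using beta_phi[OF g c1] A.alpha_ainv[OF g a] by simp
  have s6: "inv_into (E (i g)) (\<beta> g) (\<phi> (rr g) a) = \<phi> (dd g) ?c"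
    using B.ainv_alpha[OF g pc] s5 by simp
  show ?thesis unfolding B.ct_def using s1 s2 s3 s4 s6 by simp
qed

lemma Phi_add: "f \<in> carrier A.CP \<Longrightarrow> f' \<in> carrier A.CP \<Longrightarrow>
   Phi (f \<oplus>\<^bsub>A.CP\<^esub> f') = Phi f \<oplus>\<^bsub>B.CP\<^esub> Phi f'"
  unfolding Phi_def A.CP_add B.CP_add A.CP_carrier fam_def
proof (rule ext)
  fix k assume f: "f \<in> {f. (\<forall>g\<in>G. f g \<in> D g) \<and> (\<forall>g. g \<notin> G \<longrightarrow> f g = \<zero>\<^bsub>R\<^esub>)}"
    and f': "f' \<in> {f. (\<forall>g\<in>G. f g \<in> D g) \<and> (\<forall>g. g \<notin> G \<longrightarrow> f g = \<zero>\<^bsub>R\<^esub>)}"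
  show "(if k \<in> G then \<phi> (rr k) (f k \<oplus>\<^bsub>R\<^esub> f' k) else \<zero>\<^bsub>T\<^esub>) =
         (if k \<in> G then \<phi> (rr k) (f k) else \<zero>\<^bsub>T\<^esub>) \<oplus>\<^bsub>T\<^esub> (if k \<in> G then \<phi> (rr k) (f' k) else \<zero>\<^bsub>T\<^esub>)"
  proof (cases "k \<in> G")
    case True
    have "f k \<in> D (rr k)" "f' k \<in> D (rr k)" using f f' True A.D_sub_r[OF True] by auto
    thus ?thesis using phi_add True by simp
  qed simp
qed

lemma Phi_mult:
  assumes f: "f \<in> carrier A.CP" and f': "f' \<in> carrier A.CP"
  shows "Phi (f \<otimes>\<^bsub>A.CP\<^esub> f') = Phi f \<otimes>\<^bsub>B.CP\<^esub> Phi f'"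
proof (rule ext)
  fix k
  show "Phi (f \<otimes>\<^bsub>A.CP\<^esub> f') k = (Phi f \<otimes>\<^bsub>B.CP\<^esub> Phi f') k"
  proof (cases "k \<in> G")
    case False
    have e: "A.pairs k = {}" using False by auto
    show ?thesis unfolding Phi_def B.CP_mult e using False by simp
  next
    case k: True
    have fD: "\<And>g. g \<in> G \<Longrightarrow> f g \<in> D g" and fD': "\<And>g. g \<in> G \<Longrightarrow> f' g \<in> D g"
      using f f' unfolding A.CP_carrier fam_def by auto
    have terms: "\<forall>p\<in>A.pairs k. A.ct (fst p) (snd p) (f (fst p)) (f' (snd p)) \<in> D (rr k)"
    proof
      fix p assume p: "p \<in> A.pairs k"
      obtain g h where gh: "p = (g, h)" "g \<in> G" "h \<in> G" "cp g h" "m g h = k" using p by blast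
      have "A.ct g h (f g) (f' h) \<in> D k" using A.ct_in[OF gh(2,3,4) fD fD'] gh by simp
      thus "A.ct (fst p) (snd p) (f (fst p)) (f' (snd p)) \<in> D (rr k)" using gh A.D_sub_r[OF k] by auto
    qed
    have phic: "\<phi> (rr k) ` D (rr k) \<subseteq> carrier T" using phi_img_carrier[OF k] .
    have addk: "\<forall>x\<in>D (rr k). \<forall>y\<in>D (rr k). \<phi> (rr k) (x \<oplus>\<^bsub>R\<^esub> y) = \<phi> (rr k) x \<oplus>\<^bsub>T\<^esub> \<phi> (rr k) y"
      using phi_add[OF k] by blast
    have "Phi (f \<otimes>\<^bsub>A.CP\<^esub> f') k = \<phi> (rr k) (finsum R (\<lambda>p. A.ct (fst p) (snd p) (f (fst p)) (f' (snd p))) (A.pairs k))"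
      unfolding Phi_def A.CP_mult using k by simp
    also have "\<dots> = finsum T (\<lambda>p. \<phi> (rr k) (A.ct (fst p) (snd p) (f (fst p)) (f' (snd p)))) (A.pairs k)"
      by (rule RT.hom_finsum[OF A.Dr_addsub[OF k] addk phic A.fin_pairs terms])
    also have "\<dots> = finsum T (\<lambda>p. B.ct (fst p) (snd p) (Phi f (fst p)) (Phi f' (snd p))) (A.pairs k)"
    proof (rule Tr.finsum_cong')
      show "(\<lambda>p. B.ct (fst p) (snd p) (Phi f (fst p)) (Phi f' (snd p))) \<in> A.pairs k \<rightarrow> carrier T"
        using B.ct_carrier[OF subsetD[OF Pc_B Phi_in[OF f]] subsetD[OF Pc_B Phi_in[OF f']]] .
      fix p assume p: "p \<in> A.pairs k"
      obtain g h where gh: "p = (g, h)" "g \<in> G" "h \<in> G" "cp g h" "m g h = k" using p by blast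
      show "\<phi> (rr k) (A.ct (fst p) (snd p) (f (fst p)) (f' (snd p))) = B.ct (fst p) (snd p) (Phi f (fst p)) (Phi f' (snd p))"
      proof -
        have rk: "rr k = rr g" using r_prod[OF gh(2,3,4)] gh(5) by simp
        show ?thesis using phi_ct[OF gh(2,3,4) fD[OF gh(2)] fD'[OF gh(3)]] gh rk unfolding Phi_def by simp
      qed
    qed simp
    also have "\<dots> = (Phi f \<otimes>\<^bsub>B.CP\<^esub> Phi f') k" unfolding B.CP_mult by simp
    finally show ?thesis .
  qed
qed

end

context mainL begin

lemma phi_zero: assumes g: "g \<in> G" shows "\<phi> (rr g) \<zero>\<^bsub>R\<^esub> = \<zero>\<^bsub>T\<^esub>"
proof -
  have "\<forall>x\<in>D (rr g). \<forall>y\<in>D (rr g). \<phi> (rr g) (x \<oplus>\<^bsub>R\<^esub> y) = \<phi> (rr g) x \<oplus>\<^bsub>T\<^esub> \<phi> (rr g) y"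
    using phi_add[OF g] by blast
  thus ?thesis using RT.hom_zero[OF A.Dr_addsub[OF g] _ phi_img_carrier[OF g]] by blast
qed

lemma Phi_delta: "g \<in> G \<Longrightarrow> Phi (delta R g a) = delta T g (\<phi> (rr g) a)"
  unfolding Phi_def delta_def using phi_zero by (auto intro!: ext)

lemma span_A:
  "carrier A.CP \<subseteq> add_span A.CP {Psi (x \<otimes>\<^bsub>B.CP\<^esub> y) | x y. x \<in> Mc \<and> y \<in> Nc}"
proof
  let ?X = "{Psi (x \<otimes>\<^bsub>B.CP\<^esub> y) | x y. x \<in> Mc \<and> y \<in> Nc}"
  fix f assume f: "f \<in> carrier A.CP"
  show "f \<in> add_span A.CP ?X"
  proof (rule A.CP_induct[of "\<lambda>f. f \<in> add_span A.CP ?X"])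
    show "zero A.CP \<in> add_span A.CP ?X" by (rule add_span.span_zero)
  next
    fix f f' assume "f \<in> add_span A.CP ?X" "f' \<in> add_span A.CP ?X"
    thus "f \<oplus>\<^bsub>A.CP\<^esub> f' \<in> add_span A.CP ?X" by (rule add_span.span_add)
  next
    show "f \<in> carrier A.CP" by fact
  next
    fix g a assume g: "g \<in> G" and aD: "a \<in> D g"
    let ?e = "rr g"
    have sp: "add_span R {x \<otimes>\<^bsub>R\<^esub> y | x y. x \<in> D g \<and> y \<in> D g} = D g"
      using A.idem[OF g] by (simp add: set_prod_def)
    have "z \<in> add_span R {x \<otimes>\<^bsub>R\<^esub> y | x y. x \<in> D g \<and> y \<in> D g} \<Longrightarrow> delta R g z \<in> add_span A.CP ?X" for z
    proof (induction rule: add_span.induct)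
      case span_zero
    have "delta R g \<zero>\<^bsub>R\<^esub> = zero A.CP" by (rule A.delta_zero)
    thus ?case using add_span.span_zero by simp
    next
      case (span_gen z)
      then obtain x y where z: "z = x \<otimes>\<^bsub>R\<^esub> y" and xy: "x \<in> D g" "y \<in> D g" by blast
      have xe: "x \<in> D ?e" "y \<in> D ?e" using xy A.D_sub_r[OF g] by auto
      have eG: "?e \<in> G" using g by simp
      have M: "Phi (delta R ?e x) \<in> Mc" using Pc_Mc Phi_in A.delta_in[OF eG] xe by auto
      have N: "Phi (delta R g y) \<in> Nc" using Pc_Nc Phi_in A.delta_in[OF g] xy by auto
      have zD: "z \<in> D g" using z xy A.D_mult[OF g] xe by simp
      let ?a = "\<phi> ?e x" and ?b = "\<phi> ?e y"
      have aE: "?a \<in> E ?e" and bE: "?b \<in> E ?e" using phi_in[OF g] xe by auto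
      have bEg: "?b \<in> E g" using bE Eg[OF g] by simp
      have be: "\<beta> ?e ?b = ?b" using B.alpha_id[of ?e ?b] bE g by simp
      have abE: "?a \<otimes>\<^bsub>T\<^esub> ?b \<in> E g"
        using B.D_mult[of g ?a ?b] aE bEg g by simp
      have ct: "B.ct ?e g ?a ?b = ?a \<otimes>\<^bsub>T\<^esub> ?b"
        using B.ct_simp[of ?e g ?a ?b] aE bEg g be B.unit[OF g abE] by simp
      have "Phi (delta R ?e x) \<otimes>\<^bsub>B.CP\<^esub> Phi (delta R g y) = delta T g (?a \<otimes>\<^bsub>T\<^esub> ?b)"
        using Phi_delta[OF eG, of x] Phi_delta[OF g, of y] B.delta_single[of ?e g ?a ?b] aE bEg g ct by simp
      also have "\<dots> = Phi (delta R g z)" using Phi_delta[OF g, of z] phi_mul[OF g xe] z by simp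
      finally have eqn: "Psi (Phi (delta R ?e x) \<otimes>\<^bsub>B.CP\<^esub> Phi (delta R g y)) = delta R g z"
        using Psi_Phi[OF A.delta_in[OF g zD]] by simp
      have "delta R g z \<in> ?X" unfolding mem_Collect_eq
        by (rule exI[of _ "Phi (delta R ?e x)"], rule exI[of _ "Phi (delta R g y)"]) (use eqn M N in simp)
      thus ?case by (rule add_span.span_gen)
    next
      case (span_add z1 z2)
      have "z1 \<in> D g" "z2 \<in> D g" using span_add(1,2) sp by auto
      hence e: "delta R g (z1 \<oplus>\<^bsub>R\<^esub> z2) = delta R g z1 \<oplus>\<^bsub>A.CP\<^esub> delta R g z2" using A.delta_add g by blast
      show ?case unfolding e by (rule add_span.span_add[OF span_add(3,4)])
    next
      case (span_neg z)
      have "z \<in> D g" using span_neg(1) sp by auto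
      hence e: "delta R g (\<ominus>\<^bsub>R\<^esub> z) = \<ominus>\<^bsub>A.CP\<^esub> delta R g z" using A.delta_neg g by blast
      show ?case unfolding e by (rule add_span.span_neg[OF span_neg(2)])
    qed
    thus "delta R g a \<in> add_span A.CP ?X" using aD sp by blast
  qed
qed


lemma span_B_gen:
  assumes g: "g \<in> G" and h: "h \<in> G" and rh: "rr h = rr g" and z: "z \<in> Qd h"
  shows "delta T g z \<in> add_span B.CP {y \<otimes>\<^bsub>B.CP\<^esub> x | x y. x \<in> Mc \<and> y \<in> Nc}"
proof -
  let ?X = "{y \<otimes>\<^bsub>B.CP\<^esub> x | x y. x \<in> Mc \<and> y \<in> Nc}"
  let ?t = "m (i h) g"
  have t: "?t \<in> G" and ht: "cp h ?t" and mht: "m h ?t = g" and rt: "rr ?t = dd h"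
    using surj_aux[OF g h rh] by auto
  have Eh: "E h = E (rr h)" using Eg[OF h] .
  have Egr: "E g = E (rr h)" using Eg[OF g] rh by simp
  have vm: "is_multiplier T (E (rr h)) (u h ?t)" using B.wm[OF h t ht] .
  obtain v' where v': "mult_inverse T (E (rr h)) (u h ?t) v'" using B.winv[OF h t ht] by blast
  have QI: "ideal_in T (Qd h) (E (rr h))" using Qd_ideal_r[OF h] .
  have Qi: "set_prod T (Qd h) (Qd h) = Qd h" using Qd_idem[OF h] .
  have QE: "Qd h \<subseteq> E (rr h)" using QI by (rule ideal_sub)
  have z': "fst v' z \<in> Qd h" using u'close[OF h v' QI Qi z] by simp
  have zz: "z = fst (u h ?t) (fst v' z)" using v' z QE unfolding mult_inverse_def by auto
  have sp: "add_span T {q1 \<otimes>\<^bsub>T\<^esub> q2 | q1 q2. q1 \<in> Qd h \<and> q2 \<in> Qd h} = Qd h"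
    using Qi by (simp add: set_prod_def)
  have ES: "addsub T (E (rr h))" using E_addsub h by simp
  have "y \<in> add_span T {q1 \<otimes>\<^bsub>T\<^esub> q2 | q1 q2. q1 \<in> Qd h \<and> q2 \<in> Qd h} \<Longrightarrow>
        delta T g (fst (u h ?t) y) \<in> add_span B.CP ?X" for y
  proof (induction rule: add_span.induct)
    case span_zero
    have "fst (u h ?t) \<zero>\<^bsub>T\<^esub> = \<zero>\<^bsub>T\<^esub>" using Tr.mult_zero_w[OF ES vm] by simp
    hence "delta T g (fst (u h ?t) \<zero>\<^bsub>T\<^esub>) = zero B.CP" using B.delta_zero by simp
    thus ?case using add_span.span_zero by simp
  next
    case (span_gen y)
    then obtain q1 q2 where y: "y = q1 \<otimes>\<^bsub>T\<^esub> q2" and q: "q1 \<in> Qd h" "q2 \<in> Qd h" by blast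
    obtain s where s: "s \<in> \<phi> (dd h) ` D (dd h)" and q2s: "q2 = \<beta> h s" using q(2) unfolding Qd_def by blast
    have sE: "s \<in> E (i h)" using s Pdd_ideal[OF h] unfolding ideal_in_def by blast
    have sPd: "s \<in> Pd (rr ?t)" using s rt h unfolding Pd_def by simp
    have sEt: "s \<in> E ?t" using sE B.D_inv_eq[OF h] Eg[OF t] rt by simp
    have q1E: "q1 \<in> E h" using q(1) QE Eh by auto
    have N: "delta T h q1 \<in> Nc" unfolding Nc_def fam_def delta_def using q(1) addsub_Qd h
      by (auto simp: addsub_def)
    have M: "delta T ?t s \<in> Mc" unfolding Mc_def fam_def delta_def using sPd t addsub_Pdr
      by (auto simp: addsub_def)
    have "delta T h q1 \<otimes>\<^bsub>B.CP\<^esub> delta T ?t s = delta T g (B.ct h ?t q1 s)"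
      using B.delta_single[OF h t q1E sEt] ht mht by simp
    also have "B.ct h ?t q1 s = fst (u h ?t) y" using B.ct_simp[OF h t ht q1E sEt] y q2s by simp
    finally have eqn: "delta T h q1 \<otimes>\<^bsub>B.CP\<^esub> delta T ?t s = delta T g (fst (u h ?t) y)" .
    have "delta T g (fst (u h ?t) y) \<in> ?X" unfolding mem_Collect_eq
      by (rule exI[of _ "delta T ?t s"], rule exI[of _ "delta T h q1"]) (use eqn M N in simp)
    thus ?case by (rule add_span.span_gen)
  next
    case (span_add y1 y2)
    have yy: "y1 \<in> E (rr h)" "y2 \<in> E (rr h)" using span_add(1,2) sp QE by auto
    have e1: "fst (u h ?t) (y1 \<oplus>\<^bsub>T\<^esub> y2) = fst (u h ?t) y1 \<oplus>\<^bsub>T\<^esub> fst (u h ?t) y2"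
      using vm yy unfolding is_multiplier_def by blast
    have inn: "fst (u h ?t) y1 \<in> E g" "fst (u h ?t) y2 \<in> E g" using vm yy Egr unfolding is_multiplier_def by auto
    have e: "delta T g (fst (u h ?t) (y1 \<oplus>\<^bsub>T\<^esub> y2)) = delta T g (fst (u h ?t) y1) \<oplus>\<^bsub>B.CP\<^esub> delta T g (fst (u h ?t) y2)"
      using B.delta_add[OF g inn] e1 by simp
    show ?case unfolding e by (rule add_span.span_add[OF span_add(3,4)])
  next
    case (span_neg y)
    have yy: "y \<in> E (rr h)" using span_neg(1) sp QE by auto
    have e1: "fst (u h ?t) (\<ominus>\<^bsub>T\<^esub> y) = \<ominus>\<^bsub>T\<^esub> fst (u h ?t) y"
      using Tr.mult_neg_w[OF ES vm yy] by simp
    have inn: "fst (u h ?t) y \<in> E g" using vm yy Egr unfolding is_multiplier_def by auto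
    have e: "delta T g (fst (u h ?t) (\<ominus>\<^bsub>T\<^esub> y)) = \<ominus>\<^bsub>B.CP\<^esub> delta T g (fst (u h ?t) y)"
      using B.delta_neg[OF g inn] e1 by simp
    show ?case unfolding e by (rule add_span.span_neg[OF span_neg(2)])
  qed
  hence "delta T g (fst (u h ?t) (fst v' z)) \<in> add_span B.CP ?X" using z' sp by blast
  thus ?thesis by (simp only: zz[symmetric])
qed

lemma span_B:
  "carrier B.CP \<subseteq> add_span B.CP {y \<otimes>\<^bsub>B.CP\<^esub> x | x y. x \<in> Mc \<and> y \<in> Nc}"
proof
  let ?X = "{y \<otimes>\<^bsub>B.CP\<^esub> x | x y. x \<in> Mc \<and> y \<in> Nc}"
  fix f assume f: "f \<in> carrier B.CP"
  show "f \<in> add_span B.CP ?X"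
  proof (rule B.CP_induct[of "\<lambda>f. f \<in> add_span B.CP ?X"])
    show "zero B.CP \<in> add_span B.CP ?X" by (rule add_span.span_zero)
  next
    fix f f' assume "f \<in> add_span B.CP ?X" "f' \<in> add_span B.CP ?X"
    thus "f \<oplus>\<^bsub>B.CP\<^esub> f' \<in> add_span B.CP ?X" by (rule add_span.span_add)
  next
    show "f \<in> carrier B.CP" by fact
  next
    fix g a assume g: "g \<in> G" and aE: "a \<in> E g"
    let ?S = "\<Union>{\<beta> h ` (\<phi> (dd h) ` D (dd h)) | h. h \<in> G \<and> rr h = rr g}"
    have sp: "add_span T ?S = E g" using E_gen[OF g] by (simp add: ideal_sum_def)
    have "z \<in> add_span T ?S \<Longrightarrow> delta T g z \<in> add_span B.CP ?X" for z
    proof (induction rule: add_span.induct)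
      case span_zero
      have "delta T g \<zero>\<^bsub>T\<^esub> = zero B.CP" by (rule B.delta_zero)
      thus ?case using add_span.span_zero by simp
    next
      case (span_gen z)
      then obtain h where h: "h \<in> G" "rr h = rr g" and zq: "z \<in> Qd h" unfolding Qd_def by blast
      show ?case using span_B_gen[OF g h zq] .
    next
      case (span_add z1 z2)
      have "z1 \<in> E g" "z2 \<in> E g" using span_add(1,2) sp by auto
      hence e: "delta T g (z1 \<oplus>\<^bsub>T\<^esub> z2) = delta T g z1 \<oplus>\<^bsub>B.CP\<^esub> delta T g z2" using B.delta_add g by blast
      show ?case unfolding e by (rule add_span.span_add[OF span_add(3,4)])
    next
      case (span_neg z)
      have "z \<in> E g" using span_neg(1) sp by auto
      hence e: "delta T g (\<ominus>\<^bsub>T\<^esub> z) = \<ominus>\<^bsub>B.CP\<^esub> delta T g z" using B.delta_neg g by blast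
      show ?case unfolding e by (rule add_span.span_neg[OF span_neg(2)])
    qed
    thus "delta T g a \<in> add_span B.CP ?X" using aE sp by blast
  qed
qed

end

lemma span_in_carrier:
  assumes ag: "abelian_group X" and Y: "Y \<subseteq> carrier X"
  shows "add_span X Y \<subseteq> carrier X"
proof
  interpret abelian_group X by (rule ag)
  fix x assume "x \<in> add_span X Y"
  thus "x \<in> carrier X" by (induction rule: add_span.induct) (use Y in auto)
qed

context mainL begin

definition "Mr = \<lparr>carrier = Mc, mult = (\<lambda>x y. x), one = (\<lambda>_. \<zero>\<^bsub>T\<^esub>), zero = (\<lambda>_. \<zero>\<^bsub>T\<^esub>),
   add = (\<lambda>f f' g. f g \<oplus>\<^bsub>T\<^esub> f' g)\<rparr>"
definition "Nr = \<lparr>carrier = Nc, mult = (\<lambda>x y. x), one = (\<lambda>_. \<zero>\<^bsub>T\<^esub>), zero = (\<lambda>_. \<zero>\<^bsub>T\<^esub>),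
   add = (\<lambda>f f' g. f g \<oplus>\<^bsub>T\<^esub> f' g)\<rparr>"

definition "la a x = Phi a \<otimes>\<^bsub>B.CP\<^esub> x"
definition "ra x b = x \<otimes>\<^bsub>B.CP\<^esub> b"
definition "la' b y = b \<otimes>\<^bsub>B.CP\<^esub> y"
definition "ra' y a = y \<otimes>\<^bsub>B.CP\<^esub> Phi a"
definition "tau x y = Psi (x \<otimes>\<^bsub>B.CP\<^esub> y)"
definition "mu y x = y \<otimes>\<^bsub>B.CP\<^esub> x"

lemma Mr_ag: "abelian_group Mr"
  by (rule Tr.fam_abelian[OF addsub_Pdr]) (simp_all add: Mr_def Mc_def)
lemma Nr_ag: "abelian_group Nr"
  by (rule Tr.fam_abelian[OF addsub_Qd]) (simp_all add: Nr_def Nc_def)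

lemma Mr_add: "x \<oplus>\<^bsub>Mr\<^esub> y = x \<oplus>\<^bsub>B.CP\<^esub> y" by (simp add: Mr_def B.CP_add)
lemma Nr_add: "x \<oplus>\<^bsub>Nr\<^esub> y = x \<oplus>\<^bsub>B.CP\<^esub> y" by (simp add: Nr_def B.CP_add)
lemma Mr_c: "carrier Mr = Mc" by (simp add: Mr_def)
lemma Nr_c: "carrier Nr = Nc" by (simp add: Nr_def)

lemma Bc: "x \<in> Mc \<Longrightarrow> x \<in> carrier B.CP" "y \<in> Nc \<Longrightarrow> y \<in> carrier B.CP" "p \<in> Pc \<Longrightarrow> p \<in> carrier B.CP"
  using Mc_B Nc_B Pc_B by auto

lemma PhiB: "a \<in> carrier A.CP \<Longrightarrow> Phi a \<in> carrier B.CP" using Phi_in Pc_B by blast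
lemma PhiM: "a \<in> carrier A.CP \<Longrightarrow> Phi a \<in> Mc" using Phi_in Pc_Mc by blast

lemmas Bm = B.CP_mult_closed
lemmas Bassoc = B.CP_assoc

lemma Bpc: "p \<in> Pc \<Longrightarrow> p' \<in> Pc \<Longrightarrow> p \<oplus>\<^bsub>B.CP\<^esub> p' \<in> Pc"
  unfolding Pc_def B.CP_add fam_def using addsub_Pd by (auto simp: addsub_def)

lemma Psi_add: "p \<in> Pc \<Longrightarrow> p' \<in> Pc \<Longrightarrow> Psi (p \<oplus>\<^bsub>B.CP\<^esub> p') = Psi p \<oplus>\<^bsub>A.CP\<^esub> Psi p'"
proof -
  assume p: "p \<in> Pc" and p': "p' \<in> Pc"
  have "Phi (Psi p \<oplus>\<^bsub>A.CP\<^esub> Psi p') = p \<oplus>\<^bsub>B.CP\<^esub> p'"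
    using Phi_add[OF Psi_in[OF p] Psi_in[OF p']] Phi_Psi p p' by simp
  moreover have "Psi p \<oplus>\<^bsub>A.CP\<^esub> Psi p' \<in> carrier A.CP"
    using abelian_groupE(1)[OF A.CP_abelian Psi_in[OF p] Psi_in[OF p']] .
  ultimately show ?thesis using Psi_Phi by metis
qed

lemma Psi_mult_l: "a \<in> carrier A.CP \<Longrightarrow> p \<in> Pc \<Longrightarrow> Psi (Phi a \<otimes>\<^bsub>B.CP\<^esub> p) = a \<otimes>\<^bsub>A.CP\<^esub> Psi p"
proof -
  assume a: "a \<in> carrier A.CP" and p: "p \<in> Pc"
  have "Phi (a \<otimes>\<^bsub>A.CP\<^esub> Psi p) = Phi a \<otimes>\<^bsub>B.CP\<^esub> p" using Phi_mult[OF a Psi_in[OF p]] Phi_Psi[OF p] by simp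
  moreover have "a \<otimes>\<^bsub>A.CP\<^esub> Psi p \<in> carrier A.CP" using A.CP_mult_closed[OF a Psi_in[OF p]] .
  ultimately show ?thesis using Psi_Phi by metis
qed

lemma Psi_mult_r: "a \<in> carrier A.CP \<Longrightarrow> p \<in> Pc \<Longrightarrow> Psi (p \<otimes>\<^bsub>B.CP\<^esub> Phi a) = Psi p \<otimes>\<^bsub>A.CP\<^esub> a"
proof -
  assume a: "a \<in> carrier A.CP" and p: "p \<in> Pc"
  have "Phi (Psi p \<otimes>\<^bsub>A.CP\<^esub> a) = p \<otimes>\<^bsub>B.CP\<^esub> Phi a" using Phi_mult[OF Psi_in[OF p] a] Phi_Psi[OF p] by simp
  moreover have "Psi p \<otimes>\<^bsub>A.CP\<^esub> a \<in> carrier A.CP" using A.CP_mult_closed[OF Psi_in[OF p] a] .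
  ultimately show ?thesis using Psi_Phi by metis
qed

lemma bim1: "bimodule A.CP B.CP Mr la ra"
  unfolding bimodule_def Mr_c Mr_add la_def ra_def
proof (intro conjI ballI)
  show "abelian_group Mr" by (rule Mr_ag)
  fix a x assume a: "a \<in> carrier A.CP" and x: "x \<in> Mc"
  show "Phi a \<otimes>\<^bsub>B.CP\<^esub> x \<in> Mc" using MB[OF PhiM[OF a] Bc(1)[OF x]] .
  fix a' assume a': "a' \<in> carrier A.CP"
  show "Phi (a \<oplus>\<^bsub>A.CP\<^esub> a') \<otimes>\<^bsub>B.CP\<^esub> x = Phi a \<otimes>\<^bsub>B.CP\<^esub> x \<oplus>\<^bsub>B.CP\<^esub> Phi a' \<otimes>\<^bsub>B.CP\<^esub> x"
    using Phi_add[OF a a'] B.CP_ldistr[OF Bc(1)[OF x] PhiB[OF a] PhiB[OF a']] by simp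
  show "Phi (a \<otimes>\<^bsub>A.CP\<^esub> a') \<otimes>\<^bsub>B.CP\<^esub> x = Phi a \<otimes>\<^bsub>B.CP\<^esub> (Phi a' \<otimes>\<^bsub>B.CP\<^esub> x)"
    using Phi_mult[OF a a'] Bassoc[OF PhiB[OF a] PhiB[OF a'] Bc(1)[OF x]] by simp
next
  fix a x y assume a: "a \<in> carrier A.CP" and x: "x \<in> Mc" and y: "y \<in> Mc"
  show "Phi a \<otimes>\<^bsub>B.CP\<^esub> (x \<oplus>\<^bsub>B.CP\<^esub> y) = Phi a \<otimes>\<^bsub>B.CP\<^esub> x \<oplus>\<^bsub>B.CP\<^esub> Phi a \<otimes>\<^bsub>B.CP\<^esub> y"
    using B.CP_rdistr[OF PhiB[OF a] Bc(1)[OF x] Bc(1)[OF y]] .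
next
  fix x b assume x: "x \<in> Mc" and b: "b \<in> carrier B.CP"
  show "x \<otimes>\<^bsub>B.CP\<^esub> b \<in> Mc" using MB[OF x b] .
next
  fix b b' x assume b: "b \<in> carrier B.CP" and b': "b' \<in> carrier B.CP" and x: "x \<in> Mc"
  show "x \<otimes>\<^bsub>B.CP\<^esub> (b \<oplus>\<^bsub>B.CP\<^esub> b') = x \<otimes>\<^bsub>B.CP\<^esub> b \<oplus>\<^bsub>B.CP\<^esub> x \<otimes>\<^bsub>B.CP\<^esub> b'"
    using B.CP_rdistr[OF Bc(1)[OF x] b b'] .
  show "x \<otimes>\<^bsub>B.CP\<^esub> (b \<otimes>\<^bsub>B.CP\<^esub> b') = x \<otimes>\<^bsub>B.CP\<^esub> b \<otimes>\<^bsub>B.CP\<^esub> b'"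
    using Bassoc[OF Bc(1)[OF x] b b'] by simp
next
  fix b x y assume b: "b \<in> carrier B.CP" and x: "x \<in> Mc" and y: "y \<in> Mc"
  show "(x \<oplus>\<^bsub>B.CP\<^esub> y) \<otimes>\<^bsub>B.CP\<^esub> b = x \<otimes>\<^bsub>B.CP\<^esub> b \<oplus>\<^bsub>B.CP\<^esub> y \<otimes>\<^bsub>B.CP\<^esub> b"
    using B.CP_ldistr[OF b Bc(1)[OF x] Bc(1)[OF y]] .
next
  fix a x b assume a: "a \<in> carrier A.CP" and x: "x \<in> Mc" and b: "b \<in> carrier B.CP"
  show "Phi a \<otimes>\<^bsub>B.CP\<^esub> x \<otimes>\<^bsub>B.CP\<^esub> b = Phi a \<otimes>\<^bsub>B.CP\<^esub> (x \<otimes>\<^bsub>B.CP\<^esub> b)"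
    using Bassoc[OF PhiB[OF a] Bc(1)[OF x] b] .
qed

lemma bim2: "bimodule B.CP A.CP Nr la' ra'"
  unfolding bimodule_def Nr_c Nr_add la'_def ra'_def
proof (intro conjI ballI)
  show "abelian_group Nr" by (rule Nr_ag)
  fix b y assume b: "b \<in> carrier B.CP" and y: "y \<in> Nc"
  show "b \<otimes>\<^bsub>B.CP\<^esub> y \<in> Nc" using BN[OF b y] .
  fix b' assume b': "b' \<in> carrier B.CP"
  show "(b \<oplus>\<^bsub>B.CP\<^esub> b') \<otimes>\<^bsub>B.CP\<^esub> y = b \<otimes>\<^bsub>B.CP\<^esub> y \<oplus>\<^bsub>B.CP\<^esub> b' \<otimes>\<^bsub>B.CP\<^esub> y"
    using B.CP_ldistr[OF Bc(2)[OF y] b b'] .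
  show "(b \<otimes>\<^bsub>B.CP\<^esub> b') \<otimes>\<^bsub>B.CP\<^esub> y = b \<otimes>\<^bsub>B.CP\<^esub> (b' \<otimes>\<^bsub>B.CP\<^esub> y)"
    using Bassoc[OF b b' Bc(2)[OF y]] .
next
  fix b x y assume b: "b \<in> carrier B.CP" and x: "x \<in> Nc" and y: "y \<in> Nc"
  show "b \<otimes>\<^bsub>B.CP\<^esub> (x \<oplus>\<^bsub>B.CP\<^esub> y) = b \<otimes>\<^bsub>B.CP\<^esub> x \<oplus>\<^bsub>B.CP\<^esub> b \<otimes>\<^bsub>B.CP\<^esub> y"
    using B.CP_rdistr[OF b Bc(2)[OF x] Bc(2)[OF y]] .
next
  fix y a assume y: "y \<in> Nc" and a: "a \<in> carrier A.CP"
  show "y \<otimes>\<^bsub>B.CP\<^esub> Phi a \<in> Nc" using NP[OF y Phi_in[OF a]] .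
next
  fix a a' y assume a: "a \<in> carrier A.CP" and a': "a' \<in> carrier A.CP" and y: "y \<in> Nc"
  show "y \<otimes>\<^bsub>B.CP\<^esub> Phi (a \<oplus>\<^bsub>A.CP\<^esub> a') = y \<otimes>\<^bsub>B.CP\<^esub> Phi a \<oplus>\<^bsub>B.CP\<^esub> y \<otimes>\<^bsub>B.CP\<^esub> Phi a'"
    using Phi_add[OF a a'] B.CP_rdistr[OF Bc(2)[OF y] PhiB[OF a] PhiB[OF a']] by simp
  show "y \<otimes>\<^bsub>B.CP\<^esub> Phi (a \<otimes>\<^bsub>A.CP\<^esub> a') = y \<otimes>\<^bsub>B.CP\<^esub> Phi a \<otimes>\<^bsub>B.CP\<^esub> Phi a'"
    using Phi_mult[OF a a'] Bassoc[OF Bc(2)[OF y] PhiB[OF a] PhiB[OF a']] by simp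
next
  fix a x y assume a: "a \<in> carrier A.CP" and x: "x \<in> Nc" and y: "y \<in> Nc"
  show "(x \<oplus>\<^bsub>B.CP\<^esub> y) \<otimes>\<^bsub>B.CP\<^esub> Phi a = x \<otimes>\<^bsub>B.CP\<^esub> Phi a \<oplus>\<^bsub>B.CP\<^esub> y \<otimes>\<^bsub>B.CP\<^esub> Phi a"
    using B.CP_ldistr[OF PhiB[OF a] Bc(2)[OF x] Bc(2)[OF y]] .
next
  fix b y a assume b: "b \<in> carrier B.CP" and y: "y \<in> Nc" and a: "a \<in> carrier A.CP"
  show "b \<otimes>\<^bsub>B.CP\<^esub> y \<otimes>\<^bsub>B.CP\<^esub> Phi a = b \<otimes>\<^bsub>B.CP\<^esub> (y \<otimes>\<^bsub>B.CP\<^esub> Phi a)"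
    using Bassoc[OF b Bc(2)[OF y] PhiB[OF a]] .
qed

lemma pair1: "pairing A.CP B.CP Mr Nr la ra la' ra' tau"
  unfolding pairing_def Mr_c Nr_c Mr_add Nr_add la_def ra_def la'_def ra'_def tau_def
proof (intro conjI ballI)
  fix x y assume x: "x \<in> Mc" and y: "y \<in> Nc"
  show "Psi (x \<otimes>\<^bsub>B.CP\<^esub> y) \<in> carrier A.CP" using Psi_in[OF MN[OF x y]] .
  fix x' assume x': "x' \<in> Mc"
  show "Psi ((x \<oplus>\<^bsub>B.CP\<^esub> x') \<otimes>\<^bsub>B.CP\<^esub> y) = Psi (x \<otimes>\<^bsub>B.CP\<^esub> y) \<oplus>\<^bsub>A.CP\<^esub> Psi (x' \<otimes>\<^bsub>B.CP\<^esub> y)"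
    using B.CP_ldistr[OF Bc(2)[OF y] Bc(1)[OF x] Bc(1)[OF x']] Psi_add[OF MN[OF x y] MN[OF x' y]] by simp
next
  fix x y y' assume x: "x \<in> Mc" and y: "y \<in> Nc" and y': "y' \<in> Nc"
  show "Psi (x \<otimes>\<^bsub>B.CP\<^esub> (y \<oplus>\<^bsub>B.CP\<^esub> y')) = Psi (x \<otimes>\<^bsub>B.CP\<^esub> y) \<oplus>\<^bsub>A.CP\<^esub> Psi (x \<otimes>\<^bsub>B.CP\<^esub> y')"
    using B.CP_rdistr[OF Bc(1)[OF x] Bc(2)[OF y] Bc(2)[OF y']] Psi_add[OF MN[OF x y] MN[OF x y']] by simp
next
  fix x y b assume x: "x \<in> Mc" and y: "y \<in> Nc" and b: "b \<in> carrier B.CP"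
  show "Psi (x \<otimes>\<^bsub>B.CP\<^esub> b \<otimes>\<^bsub>B.CP\<^esub> y) = Psi (x \<otimes>\<^bsub>B.CP\<^esub> (b \<otimes>\<^bsub>B.CP\<^esub> y))"
    using Bassoc[OF Bc(1)[OF x] b Bc(2)[OF y]] by simp
next
  fix x y a assume x: "x \<in> Mc" and y: "y \<in> Nc" and a: "a \<in> carrier A.CP"
  show "Psi (Phi a \<otimes>\<^bsub>B.CP\<^esub> x \<otimes>\<^bsub>B.CP\<^esub> y) = a \<otimes>\<^bsub>A.CP\<^esub> Psi (x \<otimes>\<^bsub>B.CP\<^esub> y)"
    using Bassoc[OF PhiB[OF a] Bc(1)[OF x] Bc(2)[OF y]] Psi_mult_l[OF a MN[OF x y]] by simp
  show "Psi (x \<otimes>\<^bsub>B.CP\<^esub> (y \<otimes>\<^bsub>B.CP\<^esub> Phi a)) = Psi (x \<otimes>\<^bsub>B.CP\<^esub> y) \<otimes>\<^bsub>A.CP\<^esub> a"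
    using Bassoc[OF Bc(1)[OF x] Bc(2)[OF y] PhiB[OF a]] Psi_mult_r[OF a MN[OF x y]] by simp
qed

lemma pair2: "pairing B.CP A.CP Nr Mr la' ra' la ra mu"
  unfolding pairing_def Mr_c Nr_c Mr_add Nr_add la_def ra_def la'_def ra'_def mu_def
proof (intro conjI ballI)
  fix y x assume y: "y \<in> Nc" and x: "x \<in> Mc"
  show "y \<otimes>\<^bsub>B.CP\<^esub> x \<in> carrier B.CP" using Bm[OF Bc(2)[OF y] Bc(1)[OF x]] .
  fix y' assume y': "y' \<in> Nc"
  show "(y \<oplus>\<^bsub>B.CP\<^esub> y') \<otimes>\<^bsub>B.CP\<^esub> x = y \<otimes>\<^bsub>B.CP\<^esub> x \<oplus>\<^bsub>B.CP\<^esub> y' \<otimes>\<^bsub>B.CP\<^esub> x"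
    using B.CP_ldistr[OF Bc(1)[OF x] Bc(2)[OF y] Bc(2)[OF y']] .
next
  fix y x x' assume y: "y \<in> Nc" and x: "x \<in> Mc" and x': "x' \<in> Mc"
  show "y \<otimes>\<^bsub>B.CP\<^esub> (x \<oplus>\<^bsub>B.CP\<^esub> x') = y \<otimes>\<^bsub>B.CP\<^esub> x \<oplus>\<^bsub>B.CP\<^esub> y \<otimes>\<^bsub>B.CP\<^esub> x'"
    using B.CP_rdistr[OF Bc(2)[OF y] Bc(1)[OF x] Bc(1)[OF x']] .
next
  fix y x a assume y: "y \<in> Nc" and x: "x \<in> Mc" and a: "a \<in> carrier A.CP"
  show "y \<otimes>\<^bsub>B.CP\<^esub> Phi a \<otimes>\<^bsub>B.CP\<^esub> x = y \<otimes>\<^bsub>B.CP\<^esub> (Phi a \<otimes>\<^bsub>B.CP\<^esub> x)"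
    using Bassoc[OF Bc(2)[OF y] PhiB[OF a] Bc(1)[OF x]] .
next
  fix y x b assume y: "y \<in> Nc" and x: "x \<in> Mc" and b: "b \<in> carrier B.CP"
  show "b \<otimes>\<^bsub>B.CP\<^esub> y \<otimes>\<^bsub>B.CP\<^esub> x = b \<otimes>\<^bsub>B.CP\<^esub> (y \<otimes>\<^bsub>B.CP\<^esub> x)"
    using Bassoc[OF b Bc(2)[OF y] Bc(1)[OF x]] .
  show "y \<otimes>\<^bsub>B.CP\<^esub> (x \<otimes>\<^bsub>B.CP\<^esub> b) = y \<otimes>\<^bsub>B.CP\<^esub> x \<otimes>\<^bsub>B.CP\<^esub> b"
    using Bassoc[OF Bc(2)[OF y] Bc(1)[OF x] b] by simp
qed

lemma ctx: "morita_context A.CP B.CP Mr Nr la ra la' ra' tau mu"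
  unfolding morita_context_def
proof (intro conjI)
  show "bimodule A.CP B.CP Mr la ra" by (rule bim1)
  show "bimodule B.CP A.CP Nr la' ra'" by (rule bim2)
  show "pairing A.CP B.CP Mr Nr la ra la' ra' tau" by (rule pair1)
  show "pairing B.CP A.CP Nr Mr la' ra' la ra mu" by (rule pair2)
  show "\<forall>x\<in>carrier Mr. \<forall>y\<in>carrier Nr. \<forall>x'\<in>carrier Mr. la (tau x y) x' = ra x (mu y x')"
    unfolding Mr_c Nr_c la_def ra_def tau_def mu_def
  proof (intro ballI)
    fix x y x' assume x: "x \<in> Mc" and y: "y \<in> Nc" and x': "x' \<in> Mc"
    show "Phi (Psi (x \<otimes>\<^bsub>B.CP\<^esub> y)) \<otimes>\<^bsub>B.CP\<^esub> x' = x \<otimes>\<^bsub>B.CP\<^esub> (y \<otimes>\<^bsub>B.CP\<^esub> x')"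
      using Phi_Psi[OF MN[OF x y]] Bassoc[OF Bc(1)[OF x] Bc(2)[OF y] Bc(1)[OF x']] by simp
  qed
  show "\<forall>y\<in>carrier Nr. \<forall>x\<in>carrier Mr. \<forall>y'\<in>carrier Nr. la' (mu y x) y' = ra' y (tau x y')"
    unfolding Mr_c Nr_c la'_def ra'_def tau_def mu_def
  proof (intro ballI)
    fix y x y' assume y: "y \<in> Nc" and x: "x \<in> Mc" and y': "y' \<in> Nc"
    show "y \<otimes>\<^bsub>B.CP\<^esub> x \<otimes>\<^bsub>B.CP\<^esub> y' = y \<otimes>\<^bsub>B.CP\<^esub> Phi (Psi (x \<otimes>\<^bsub>B.CP\<^esub> y'))"
      using Phi_Psi[OF MN[OF x y']] Bassoc[OF Bc(2)[OF y] Bc(1)[OF x] Bc(2)[OF y']] by simp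
  qed
qed

lemma spanA': "add_span A.CP {tau x y |x y. x \<in> carrier Mr \<and> y \<in> carrier Nr} = carrier A.CP"
proof -
  have X: "{tau x y |x y. x \<in> carrier Mr \<and> y \<in> carrier Nr} = {Psi (x \<otimes>\<^bsub>B.CP\<^esub> y) | x y. x \<in> Mc \<and> y \<in> Nc}"
    by (simp add: tau_def Mr_c Nr_c)
  have Xc: "{Psi (x \<otimes>\<^bsub>B.CP\<^esub> y) | x y. x \<in> Mc \<and> y \<in> Nc} \<subseteq> carrier A.CP" using Psi_in MN by blast
  show ?thesis unfolding X using span_in_carrier[OF A.CP_abelian Xc] span_A by blast
qed

lemma spanB': "add_span B.CP {mu y x |x y. x \<in> carrier Mr \<and> y \<in> carrier Nr} = carrier B.CP"
proof -
  have Y: "{mu y x |x y. x \<in> carrier Mr \<and> y \<in> carrier Nr} = {y \<otimes>\<^bsub>B.CP\<^esub> x | x y. x \<in> Mc \<and> y \<in> Nc}"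
    by (simp add: mu_def Mr_c Nr_c)
  have Yc: "{y \<otimes>\<^bsub>B.CP\<^esub> x | x y. x \<in> Mc \<and> y \<in> Nc} \<subseteq> carrier B.CP" using Bm Bc by blast
  show ?thesis unfolding Y using span_in_carrier[OF B.CP_abelian Yc] span_B by blast
qed

theorem morita: "morita_equivalent A.CP B.CP TYPE('g \<Rightarrow> 'b) TYPE('g \<Rightarrow> 'b)"
  unfolding morita_equivalent_def
  using ctx spanA' spanB' by blast

end

theorem mainTheorem4:
  fixes G :: "'g set" and m :: "'g \<Rightarrow> 'g \<Rightarrow> 'g" and i :: "'g \<Rightarrow> 'g"
    and R :: "'a ring" and D :: "'g \<Rightarrow> 'a set" and \<alpha> :: "'g \<Rightarrow> 'a \<Rightarrow> 'a"
    and w :: "'g \<Rightarrow> 'g \<Rightarrow> ('a \<Rightarrow> 'a) \<times> ('a \<Rightarrow> 'a)"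
    and T :: "'b ring" and E :: "'g \<Rightarrow> 'b set" and \<beta> :: "'g \<Rightarrow> 'b \<Rightarrow> 'b"
    and u :: "'g \<Rightarrow> 'g \<Rightarrow> ('b \<Rightarrow> 'b) \<times> ('b \<Rightarrow> 'b)" and \<phi> :: "'g \<Rightarrow> 'a \<Rightarrow> 'b"
  assumes "groupoid G m i" and "finite G"
    and "ring R"
    and "twisted_partial_action G m i R D \<alpha> w"
    and "rng T"
    and "is_globalization G m i R D \<alpha> w T E \<beta> u \<phi>"
  shows "morita_equivalent (crossed_product G m i R D \<alpha> w) (crossed_product G m i T E \<beta> u)
           TYPE('g \<Rightarrow> 'b) TYPE('g \<Rightarrow> 'b)"
  proof -
  interpret mainL G m i R D \<alpha> w T E \<beta> u \<phi>
    by (rule mainL.intro[OF assms])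
  show ?thesis by (rule morita)
qed

end
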